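(* Let $H$ be the hinge and $r=2$. The node-weights $w=(w_1,w_2,w_3)=(4,2,1)$ and $w'=(1,2,4)$ both yield, via $\lambda_i=w_i/z_i^2$ with $z_i=\sum_{j\in N(i)}w_j$, an activity vector proportional to $(49,18,49)$; consequently the $2$-branching $w$-random walk and the $2$-branching $w'$-random walk induce two distinct simple, invariant Gibbs measures on $\hom(\mathbb{T}^2,H)$ for the activity vector $\lambda=(49,18,49)$.
   Context: The hinge is the constraint graph with nodes $1$ (green), $2$ (yellow), $3$ (red), each node looped, and edges $\{1,2\},\{2,3\}$ (no edge between $1$ and $3$). $N(i)$ is the set of nodes adjacent to $i$ (including $i$ if looped). $\mathbb{T}^2$ is the infinite connected cycle-free graph with all degrees $3$. For positive weights $w$ the $2$-branching $w$-random walk induces the law on $\hom(\mathbb{T}^2,H)$ obtained by fixing a root $x$, choosing $\varphi(x)=i$ with probability $\propto w_iz_i$, and giving each non-root site $v$ with parent $u$ spin $j\in N(\varphi(u))$ with probability $w_j/z_{\varphi(u)}$, independently given $\varphi(u)$. Activity vectors are positive vectors indexed by nodes; Gibbs measures for $\lambda$ are probability measures on $\hom(\mathbb{T}^2,H)$ whose conditional law on each finite set $U$ of sites, given the configuration outside $U$, is a.s. the conditional law under the finite measure on $\hom(U\cup\partial U,H)$ with weights $\prod_v\lambda_{\varphi(v)}$ given the values on $\partial U$ (the sites outside $U$ adjacent to $U$). A Gibbs measure on a tree is simple if the restrictions to the components of $T\setminus\{u\}$ are conditionally independent given $\varphi(u)$, for every site $u$; it is invariant if preserved by all automorphisms of the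 tree. *)

theory Defs
  imports "HOL-Probability.Probability"
begin

definition hnodes :: "nat set" where "hnodes = {1,2,3}"

definition hadj :: "nat \<Rightarrow> nat \<Rightarrow> bool" where
  "hadj i j \<longleftrightarrow> i \<in> hnodes \<and> j \<in> hnodes \<and>
     (i = j \<or> {i,j} = {1,2} \<or> {i,j} = {2,3})"

definition hN :: "nat \<Rightarrow> nat set" where "hN i = {j \<in> hnodes. hadj i j}"

definition hz :: "(nat \<Rightarrow> real) \<Rightarrow> nat \<Rightarrow> real" where
  "hz w i = (\<Sum>j\<in>hN i. w j)"

definition lam_of :: "(nat \<Rightarrow> real) \<Rightarrow> nat \<Rightarrow> real" where
  "lam_of w i = w i / (hz w i)^2"

section \<open>The 3-regular tree T^2 (reduced words over three letters)\<close>

typedef tvert = "{xs :: nat list. set xs \<subseteq> {0,1,2} \<and>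
                     (\<forall>i. Suc i < length xs \<longrightarrow> xs ! i \<noteq> xs ! Suc i)}"
  by (rule exI[of _ "[]"]) auto

definition tadj :: "tvert \<Rightarrow> tvert \<Rightarrow> bool" where
  "tadj a b \<longleftrightarrow> (\<exists>c. Rep_tvert b = Rep_tvert a @ [c]) \<or> (\<exists>c. Rep_tvert a = Rep_tvert b @ [c])"

definition tcomp :: "tvert \<Rightarrow> tvert \<Rightarrow> tvert set" where
  "tcomp u v = {y. (\<lambda>a b. tadj a b \<and> a \<noteq> u \<and> b \<noteq> u)\<^sup>*\<^sup>* v y}"

definition tparent :: "tvert \<Rightarrow> tvert \<Rightarrow> tvert" where
  "tparent x v = (THE u. tadj v u \<and> x \<in> tcomp v u)"

definition tree_aut :: "(tvert \<Rightarrow> tvert) \<Rightarrow> bool" where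
  "tree_aut \<sigma> \<longleftrightarrow> bij \<sigma> \<and> (\<forall>a b. tadj a b \<longleftrightarrow> tadj (\<sigma> a) (\<sigma> b))"

definition cfg_space :: "(tvert \<Rightarrow> nat) measure" where
  "cfg_space = PiM UNIV (\<lambda>_. count_space hnodes)"

definition hom_set :: "(tvert \<Rightarrow> nat) set" where
  "hom_set = {\<phi>. \<forall>a b. tadj a b \<longrightarrow> hadj (\<phi> a) (\<phi> b)}"

definition merge_cfg :: "tvert set \<Rightarrow> (tvert \<Rightarrow> nat) \<Rightarrow> (tvert \<Rightarrow> nat) \<Rightarrow> tvert \<Rightarrow> nat" where
  "merge_cfg U \<eta> \<omega> = (\<lambda>v. if v \<in> U then \<eta> v else \<omega> v)"

text \<open>Weight of the configuration eta on U given the boundary values of omega on dU: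
  product of activities over U (the factor for dU is common and cancels),
  provided the combined configuration is a homomorphism on U \<union> dU.\<close>
definition spec_weight :: "(nat \<Rightarrow> real) \<Rightarrow> tvert set \<Rightarrow> (tvert \<Rightarrow> nat) \<Rightarrow> (tvert \<Rightarrow> nat) \<Rightarrow> real" where
  "spec_weight lam U \<omega> \<eta> =
     (if (\<forall>a b. a \<in> U \<and> tadj a b \<longrightarrow> hadj (merge_cfg U \<eta> \<omega> a) (merge_cfg U \<eta> \<omega> b))
      then (\<Prod>v\<in>U. lam (\<eta> v)) else 0)"

definition spec_Z :: "(nat \<Rightarrow> real) \<Rightarrow> tvert set \<Rightarrow> (tvert \<Rightarrow> nat) \<Rightarrow> real" where
  "spec_Z lam U \<omega> = (\<Sum>\<eta>\<in>PiE U (\<lambda>_. hnodes). spec_weight lam U \<omega> \<eta>)"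

definition gibbs :: "(nat \<Rightarrow> real) \<Rightarrow> (tvert \<Rightarrow> nat) measure \<Rightarrow> bool" where
  "gibbs lam \<mu> \<longleftrightarrow> prob_space \<mu> \<and> sets \<mu> = sets cfg_space \<and> emeasure \<mu> hom_set = 1 \<and>
     (\<forall>U A. finite U \<longrightarrow> A \<in> sets cfg_space \<longrightarrow>
        measure \<mu> A = (\<integral>\<omega>. (\<Sum>\<eta>\<in>PiE U (\<lambda>_. hnodes).
             spec_weight lam U \<omega> \<eta> / spec_Z lam U \<omega> * indicator A (merge_cfg U \<eta> \<omega>)) \<partial>\<mu>))"

definition comp_events :: "tvert set \<Rightarrow> (tvert \<Rightarrow> nat) set set" where
  "comp_events C = {A \<in> sets cfg_space. \<forall>\<phi> \<psi>. \<phi> \<in> space cfg_space \<longrightarrow> \<psi> \<in> space cfg_space \<longrightarrow>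
       (\<forall>v\<in>C. \<phi> v = \<psi> v) \<longrightarrow> (\<phi> \<in> A \<longleftrightarrow> \<psi> \<in> A)}"

definition simple_gibbs :: "(nat \<Rightarrow> real) \<Rightarrow> (tvert \<Rightarrow> nat) measure \<Rightarrow> bool" where
  "simple_gibbs lam \<mu> \<longleftrightarrow> gibbs lam \<mu> \<and>
     (\<forall>u i. measure \<mu> {\<phi> \<in> space \<mu>. \<phi> u = i} > 0 \<longrightarrow>
        prob_space.indep_sets (uniform_measure \<mu> {\<phi> \<in> space \<mu>. \<phi> u = i})
          (\<lambda>v. comp_events (tcomp u v)) {v. tadj u v})"

definition invariant_measure :: "(tvert \<Rightarrow> nat) measure \<Rightarrow> bool" where
  "invariant_measure \<mu> \<longleftrightarrow> (\<forall>\<sigma>. tree_aut \<sigma> \<longrightarrow> distr \<mu> cfg_space (\<lambda>\<phi>. \<phi> \<circ> \<sigma>) = \<mu>)"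

definition root_prob :: "(nat \<Rightarrow> real) \<Rightarrow> nat \<Rightarrow> real" where
  "root_prob w i = (if i \<in> hnodes then w i * hz w i / (\<Sum>k\<in>hnodes. w k * hz w k) else 0)"

definition step_prob :: "(nat \<Rightarrow> real) \<Rightarrow> nat \<Rightarrow> nat \<Rightarrow> real" where
  "step_prob w i j = (if hadj i j then w j / hz w i else 0)"

definition walk_law :: "(nat \<Rightarrow> real) \<Rightarrow> tvert \<Rightarrow> (tvert \<Rightarrow> nat) measure \<Rightarrow> bool" where
  "walk_law w x \<mu> \<longleftrightarrow> prob_space \<mu> \<and> sets \<mu> = sets cfg_space \<and>
     (\<forall>S \<eta>. finite S \<and> x \<in> S \<and> (\<forall>v\<in>S - {x}. tparent x v \<in> S) \<longrightarrow>
        measure \<mu> {\<phi> \<in> space \<mu>. \<forall>v\<in>S. \<phi> v = \<eta> v} =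
          root_prob w (\<eta> x) * (\<Prod>v\<in>S - {x}. step_prob w (\<eta> (tparent x v)) (\<eta> v)))"

definition wA :: "nat \<Rightarrow> real" where
  "wA i = (if i = 1 then 4 else if i = 2 then 2 else if i = 3 then 1 else 0)"
definition wB :: "nat \<Rightarrow> real" where
  "wB i = (if i = 1 then 1 else if i = 2 then 2 else if i = 3 then 4 else 0)"
definition lamT :: "nat \<Rightarrow> real" where
  "lamT i = (if i = 1 then 49 else if i = 2 then 18 else if i = 3 then 49 else 0)"

end

theory Submission
  imports Defs
begin
definition valid :: "nat list \<Rightarrow> bool" where
  "valid xs \<longleftrightarrow> set xs \<subseteq> {0,1,2} \<and> (\<forall>i. Suc i < length xs \<longrightarrow> xs ! i \<noteq> xs ! Suc i)"

lemma valid_Rep: "valid (Rep_tvert v)"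
  using Rep_tvert[of v] unfolding valid_def by auto

lemma Abs_inv: "valid xs \<Longrightarrow> Rep_tvert (Abs_tvert xs) = xs"
  by (rule Abs_tvert_inverse) (simp add: valid_def)

lemma valid_Nil[simp]: "valid []" by (simp add: valid_def)

lemma valid_snoc: "valid (xs @ [c]) \<longleftrightarrow> valid xs \<and> c \<in> {0,1,2} \<and> (xs \<noteq> [] \<longrightarrow> last xs \<noteq> c)"
proof -
  have A: "(\<forall>i. Suc i < length (xs@[c]) \<longrightarrow> (xs@[c]) ! i \<noteq> (xs@[c]) ! Suc i) \<longleftrightarrow>
        (\<forall>i. Suc i < length xs \<longrightarrow> xs ! i \<noteq> xs ! Suc i) \<and> (xs \<noteq> [] \<longrightarrow> last xs \<noteq> c)"
  proof (intro iffI conjI allI impI)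
    fix i assume h: "\<forall>i. Suc i < length (xs@[c]) \<longrightarrow> (xs@[c]) ! i \<noteq> (xs@[c]) ! Suc i"
      "Suc i < length xs"
    then show "xs ! i \<noteq> xs ! Suc i" using h(1)[rule_format, of i] by (auto simp: nth_append)
  next
    assume h: "\<forall>i. Suc i < length (xs@[c]) \<longrightarrow> (xs@[c]) ! i \<noteq> (xs@[c]) ! Suc i" "xs \<noteq> []"
    then show "last xs \<noteq> c" using h(1)[rule_format, of "length xs - 1"] by (auto simp: nth_append last_conv_nth)
  next
    fix i assume h: "(\<forall>i. Suc i < length xs \<longrightarrow> xs ! i \<noteq> xs ! Suc i) \<and> (xs \<noteq> [] \<longrightarrow> last xs \<noteq> c)"
      "Suc i < length (xs @ [c])"
    show "(xs @ [c]) ! i \<noteq> (xs @ [c]) ! Suc i"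
    proof (cases "Suc i < length xs")
      case True then show ?thesis using h by (auto simp: nth_append)
    next
      case False then have "i = length xs - 1" "xs \<noteq> []" using h(2) by auto
      then show ?thesis using h by (auto simp: nth_append last_conv_nth split: if_splits)
    qed
  qed
  show ?thesis unfolding valid_def A by auto
qed

lemma valid_butlast: "valid xs \<Longrightarrow> valid (butlast xs)"
  by (cases xs rule: rev_cases) (auto simp: valid_snoc)

lemma valid_take: "valid xs \<Longrightarrow> valid (take k xs)"
  unfolding valid_def by (auto dest: in_set_takeD)

lemma valid_appendD: "valid (xs @ ys) \<Longrightarrow> valid xs"
  by (metis append_eq_conv_conj valid_take)

definition root0 :: tvert where "root0 = Abs_tvert []"
lemma Rep_root0[simp]: "Rep_tvert root0 = []" by (simp add: root0_def Abs_inv)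

lemma tadj_sym: "tadj a b \<longleftrightarrow> tadj b a" unfolding tadj_def by auto

lemma tadj_len: "tadj a b \<Longrightarrow> length (Rep_tvert a) \<noteq> length (Rep_tvert b)"
  unfolding tadj_def by auto

lemma tadj_irrefl[simp]: "\<not> tadj a a" using tadj_len by blast

definition par0 :: "tvert \<Rightarrow> tvert" where "par0 v = Abs_tvert (butlast (Rep_tvert v))"

lemma Rep_par0: "Rep_tvert (par0 v) = butlast (Rep_tvert v)"
  by (simp add: par0_def Abs_inv valid_butlast valid_Rep)

lemma tadj_par0: "v \<noteq> root0 \<Longrightarrow> tadj v (par0 v)"
proof -
  assume "v \<noteq> root0"
  then have "Rep_tvert v \<noteq> []" by (metis Rep_root0 Rep_tvert_inject)
  then show ?thesis unfolding tadj_def Rep_par0 by (metis append_butlast_last_id)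
qed

lemma ne_root0: "v \<noteq> root0 \<longleftrightarrow> Rep_tvert v \<noteq> []"
  by (metis Rep_root0 Rep_tvert_inject)

definition Rv :: "tvert \<Rightarrow> tvert \<Rightarrow> tvert \<Rightarrow> bool" where
  "Rv u a b \<longleftrightarrow> tadj a b \<and> a \<noteq> u \<and> b \<noteq> u"

lemma tcomp_Rv: "tcomp u v = {y. (Rv u)\<^sup>*\<^sup>* v y}"
  unfolding tcomp_def Rv_def by simp

lemma tcomp_step: "y \<in> tcomp u v \<Longrightarrow> tadj y z \<Longrightarrow> y \<noteq> u \<Longrightarrow> z \<noteq> u \<Longrightarrow> z \<in> tcomp u v"
  unfolding tcomp_Rv by (auto intro: rtranclp.rtrancl_into_rtrancl simp: Rv_def)

lemma tcomp_refl: "v \<in> tcomp u v" unfolding tcomp_Rv by simp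

lemma child_comp:
  assumes "Rep_tvert c = Rep_tvert v @ [d]" "y \<in> tcomp v c"
  shows "prefix (Rep_tvert v @ [d]) (Rep_tvert y)"
proof -
  have "(Rv v)\<^sup>*\<^sup>* c y" using assms(2) unfolding tcomp_Rv by simp
  then show ?thesis
  proof induction
    case base then show ?case using assms(1) by simp
  next
    case (step y z)
    then have t: "tadj y z" "z \<noteq> v" by (auto simp: Rv_def)
    from t(1) show ?case unfolding tadj_def
    proof
      assume "\<exists>c. Rep_tvert z = Rep_tvert y @ [c]"
      then show ?thesis using step.IH by (auto simp: prefix_def)
    next
      assume "\<exists>c. Rep_tvert y = Rep_tvert z @ [c]"
      then obtain e where e: "Rep_tvert y = Rep_tvert z @ [e]" by blast
      show ?thesis
      proof (cases "Rep_tvert y = Rep_tvert v @ [d]")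
        case True then have "Rep_tvert z = Rep_tvert v" using e by simp
        then show ?thesis using t(2) Rep_tvert_inject by blast
      next
        case False
        then show ?thesis using step.IH e
          by (metis prefix_snoc)
      qed
    qed
  qed
qed

lemma down_path:
  "length (Rep_tvert y) < length (Rep_tvert v) \<Longrightarrow> (Rv v)\<^sup>*\<^sup>* y root0"
proof (induction "length (Rep_tvert y)" arbitrary: y)
  case 0 then have "y = root0" by (metis Rep_root0 Rep_tvert_inject length_0_conv)
  then show ?case by simp
next
  case (Suc n)
  then have ne: "y \<noteq> root0" by (metis Rep_root0 list.size(3) nat.distinct(1))
  have "length (Rep_tvert (par0 y)) = n" using Suc(2) by (simp add: Rep_par0)
  then have "(Rv v)\<^sup>*\<^sup>* (par0 y) root0" using Suc by simp
  moreover have "Rv v y (par0 y)" unfolding Rv_def using tadj_par0[OF ne] Suc(2,3)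
    by (auto simp: Rep_par0)
  ultimately show ?case by (meson converse_rtranclp_into_rtranclp)
qed

lemma tadj_cases: "tadj v u \<Longrightarrow> u = par0 v \<and> v \<noteq> root0 \<or> (\<exists>d. Rep_tvert u = Rep_tvert v @ [d])"
  unfolding tadj_def
  by (metis Rep_par0 Rep_tvert_inverse butlast_snoc ne_root0 par0_def snoc_eq_iff_butlast)

lemma ex1_root0:
  assumes "v \<noteq> root0"
  shows "tadj v (par0 v) \<and> root0 \<in> tcomp v (par0 v)"
    "tadj v u \<Longrightarrow> root0 \<in> tcomp v u \<Longrightarrow> u = par0 v"
proof -
  show "tadj v (par0 v) \<and> root0 \<in> tcomp v (par0 v)"
    using tadj_par0[OF assms] down_path[of "par0 v" v] assms
    by (auto simp: tcomp_Rv Rep_par0 ne_root0)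
  assume "tadj v u" "root0 \<in> tcomp v u"
  then show "u = par0 v" using tadj_cases[of v u] child_comp[of u v _ root0]
    by (auto simp: prefix_def)
qed

definition stp :: "nat list \<Rightarrow> nat \<Rightarrow> nat list" where
  "stp y c = (if y \<noteq> [] \<and> last y = c then butlast y else y @ [c])"

lemma valid_stp: "valid y \<Longrightarrow> c \<in> {0,1,2} \<Longrightarrow> valid (stp y c)"
  unfolding stp_def by (auto simp: valid_butlast valid_snoc)

lemma valid_foldl: "valid x \<Longrightarrow> set v \<subseteq> {0,1,2} \<Longrightarrow> valid (foldl stp x v)"
  by (induction v arbitrary: x) (auto simp: valid_stp)

lemma stp_stp: "valid y \<Longrightarrow> stp (stp y c) c = y"
proof (cases "y \<noteq> [] \<and> last y = c")
  case True
  assume v: "valid y"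
  obtain y' where y': "y = y' @ [c]" using True by (metis append_butlast_last_id)
  then have "y' \<noteq> [] \<longrightarrow> last y' \<noteq> c" using v by (simp add: valid_snoc)
  then show ?thesis using y' by (auto simp: stp_def)
qed (auto simp: stp_def)

lemma tadj_stp: "tadj a b \<longleftrightarrow> (\<exists>c\<in>{0,1,2}. Rep_tvert b = stp (Rep_tvert a) c)"
proof
  assume "tadj a b"
  then show "\<exists>c\<in>{0,1,2}. Rep_tvert b = stp (Rep_tvert a) c" unfolding tadj_def
  proof
    assume "\<exists>c. Rep_tvert b = Rep_tvert a @ [c]"
    then obtain c where c: "Rep_tvert b = Rep_tvert a @ [c]" by blast
    have "valid (Rep_tvert a @ [c])" using valid_Rep[of b] c by simp
    then show ?thesis using c by (auto simp: valid_snoc stp_def)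
  next
    assume "\<exists>c. Rep_tvert a = Rep_tvert b @ [c]"
    then obtain c where c: "Rep_tvert a = Rep_tvert b @ [c]" by blast
    have "valid (Rep_tvert b @ [c])" using valid_Rep[of a] c by simp
    then show ?thesis using c by (auto simp: valid_snoc stp_def)
  qed
next
  assume "\<exists>c\<in>{0,1,2}. Rep_tvert b = stp (Rep_tvert a) c"
  then show "tadj a b" unfolding tadj_def stp_def
    by (metis append_butlast_last_id)
qed

lemma foldl_stp_stp: "valid b \<Longrightarrow> c \<in> {0,1,2} \<Longrightarrow> valid a \<Longrightarrow>
   foldl stp a (stp b c) = stp (foldl stp a b) c"
proof (cases "b \<noteq> [] \<and> last b = c")
  case True
  assume v: "valid b" "c \<in> {0,1,2}" "valid a"
  obtain b' where b': "b = b' @ [c]" using True by (metis append_butlast_last_id)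
  have vb': "valid b'" using v b' valid_appendD by blast
  have "stp b c = b'" using b' by (simp add: stp_def)
  moreover have "foldl stp a b = stp (foldl stp a b') c" using b' by simp
  moreover have "valid (foldl stp a b')" using valid_foldl vb' v unfolding valid_def by auto
  ultimately show ?thesis using stp_stp by simp
next
  case False then have "stp b c = b @ [c]" unfolding stp_def by auto
  then show ?thesis by (simp add: stp_def)
qed

lemma foldl_assoc: "valid a \<Longrightarrow> valid b \<Longrightarrow> set c \<subseteq> {0,1,2} \<Longrightarrow>
   foldl stp a (foldl stp b c) = foldl stp (foldl stp a b) c"
proof (induction c arbitrary: b)
  case Nil then show ?case by simp
next
  case (Cons d c)
  have "foldl stp a (foldl stp b (d # c)) = foldl stp a (foldl stp (stp b d) c)" by simp
  also have "\<dots> = foldl stp (foldl stp a (stp b d)) c"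
    using Cons by (simp add: valid_stp)
  also have "foldl stp a (stp b d) = stp (foldl stp a b) d"
    using Cons by (simp add: foldl_stp_stp)
  finally show ?case by simp
qed

lemma foldl_rev_self: "foldl stp (rev x) x = []"
proof (induction x)
  case (Cons c x) then show ?case by (simp add: stp_def)
qed simp

lemma foldl_self_rev: "foldl stp x (rev x) = []"
proof (induction x rule: rev_induct)
  case (snoc c x) then show ?case by (simp add: stp_def)
qed simp

lemma foldl_Nil: "valid v \<Longrightarrow> foldl stp [] v = v"
proof (induction v rule: rev_induct)
  case (snoc c v)
  then have "valid v" "v \<noteq> [] \<longrightarrow> last v \<noteq> c" by (auto simp: valid_snoc)
  then have "stp v c = v @ [c]" by (auto simp: stp_def)
  then show ?case using snoc \<open>valid v\<close> by simp
qed simp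

lemma valid_rev: "valid x \<Longrightarrow> valid (rev x)"
  unfolding valid_def
proof (intro conjI allI impI)
  fix i assume h: "set x \<subseteq> {0, 1, 2} \<and> (\<forall>i. Suc i < length x \<longrightarrow> x ! i \<noteq> x ! Suc i)" "Suc i < length (rev x)"
  then have "x ! (length x - Suc (Suc i)) \<noteq> x ! Suc (length x - Suc (Suc i))"
    by auto
  moreover have "Suc (length x - Suc (Suc i)) = length x - Suc i" using h by auto
  ultimately show "rev x ! i \<noteq> rev x ! Suc i" using h by (auto simp: rev_nth)
qed (insert valid_def, auto)

definition Lmap :: "tvert \<Rightarrow> tvert \<Rightarrow> tvert" where
  "Lmap x v = Abs_tvert (foldl stp (Rep_tvert x) (Rep_tvert v))"

lemma Rep_Lmap: "Rep_tvert (Lmap x v) = foldl stp (Rep_tvert x) (Rep_tvert v)"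
  unfolding Lmap_def using valid_Rep[of x] valid_Rep[of v]
  by (intro Abs_inv valid_foldl) (auto simp: valid_def)

definition Linv :: "tvert \<Rightarrow> tvert" where "Linv x = Abs_tvert (rev (Rep_tvert x))"

lemma Rep_Linv: "Rep_tvert (Linv x) = rev (Rep_tvert x)"
  unfolding Linv_def by (simp add: Abs_inv valid_rev valid_Rep)

lemma set_Rep: "set (Rep_tvert v) \<subseteq> {0,1,2}" using valid_Rep[of v] unfolding valid_def by auto

lemma Lmap_Linv1: "Lmap (Linv x) (Lmap x v) = v"
proof -
  have "Rep_tvert (Lmap (Linv x) (Lmap x v)) = foldl stp (rev (Rep_tvert x)) (foldl stp (Rep_tvert x) (Rep_tvert v))"
    by (simp add: Rep_Lmap Rep_Linv)
  also have "\<dots> = Rep_tvert v"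
    by (subst foldl_assoc[OF valid_rev[OF valid_Rep] valid_Rep set_Rep]) (simp add: foldl_rev_self foldl_Nil valid_Rep)
  finally show ?thesis by (simp add: Rep_tvert_inject)
qed

lemma Lmap_Linv2: "Lmap x (Lmap (Linv x) v) = v"
proof -
  have "Rep_tvert (Lmap x (Lmap (Linv x) v)) = foldl stp (Rep_tvert x) (foldl stp (rev (Rep_tvert x)) (Rep_tvert v))"
    by (simp add: Rep_Lmap Rep_Linv)
  also have "\<dots> = Rep_tvert v"
    by (subst foldl_assoc[OF valid_Rep valid_rev[OF valid_Rep] set_Rep]) (simp add: foldl_self_rev foldl_Nil valid_Rep)
  finally show ?thesis by (simp add: Rep_tvert_inject)
qed

lemma Lmap_root0: "Lmap x root0 = x"
  by (simp add: Lmap_def Rep_tvert_inverse)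

lemma Lmap_tadj: "tadj a b \<Longrightarrow> tadj (Lmap x a) (Lmap x b)"
proof -
  assume "tadj a b"
  then obtain c where c: "c \<in> {0,1,2}" "Rep_tvert b = stp (Rep_tvert a) c" by (auto simp: tadj_stp)
  have "Rep_tvert (Lmap x b) = stp (Rep_tvert (Lmap x a)) c"
    unfolding Rep_Lmap c(2) using c(1) valid_Rep by (simp add: foldl_stp_stp)
  then show ?thesis using c(1) by (auto simp: tadj_stp)
qed

lemma Lmap_aut: "tree_aut (Lmap x)"
  unfolding tree_aut_def
proof (intro conjI allI iffI)
  show "bij (Lmap x)" by (rule o_bij[of "Lmap (Linv x)"]) (auto simp: Lmap_Linv1 Lmap_Linv2 fun_eq_iff)
next
  fix a b assume "tadj (Lmap x a) (Lmap x b)"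
  then have "tadj (Lmap (Linv x) (Lmap x a)) (Lmap (Linv x) (Lmap x b))" by (rule Lmap_tadj)
  then show "tadj a b" by (simp add: Lmap_Linv1)
qed (rule Lmap_tadj)

lemma aut_bij: "tree_aut \<sigma> \<Longrightarrow> bij \<sigma>" by (simp add: tree_aut_def)
lemma aut_tadj: "tree_aut \<sigma> \<Longrightarrow> tadj (\<sigma> a) (\<sigma> b) \<longleftrightarrow> tadj a b" by (simp add: tree_aut_def)
lemma aut_inv1: "tree_aut \<sigma> \<Longrightarrow> inv \<sigma> (\<sigma> x) = x" by (simp add: aut_bij bij_is_inj)
lemma aut_inv2: "tree_aut \<sigma> \<Longrightarrow> \<sigma> (inv \<sigma> x) = x" by (simp add: aut_bij bij_is_surj surj_f_inv_f)
lemma aut_inj: "tree_aut \<sigma> \<Longrightarrow> \<sigma> a = \<sigma> b \<longleftrightarrow> a = b" using aut_inv1 by metis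

lemma aut_inv: "tree_aut \<sigma> \<Longrightarrow> tree_aut (inv \<sigma>)"
proof -
  assume s: "tree_aut \<sigma>"
  have "bij (inv \<sigma>)" using aut_bij[OF s] by (rule bij_imp_bij_inv)
  moreover have "tadj a b \<longleftrightarrow> tadj (inv \<sigma> a) (inv \<sigma> b)" for a b
    using aut_tadj[OF s, of "inv \<sigma> a" "inv \<sigma> b"] by (simp add: aut_inv2[OF s])
  ultimately show ?thesis unfolding tree_aut_def by blast
qed

lemma Rv_aut: "tree_aut \<sigma> \<Longrightarrow> Rv u a b \<Longrightarrow> Rv (\<sigma> u) (\<sigma> a) (\<sigma> b)"
  unfolding Rv_def by (simp add: aut_tadj aut_inj)

lemma rtr_aut: "tree_aut \<sigma> \<Longrightarrow> (Rv u)\<^sup>*\<^sup>* a b \<Longrightarrow> (Rv (\<sigma> u))\<^sup>*\<^sup>* (\<sigma> a) (\<sigma> b)"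
proof -
  assume s: "tree_aut \<sigma>" and r: "(Rv u)\<^sup>*\<^sup>* a b"
  from r show ?thesis
  proof induction
    case (step y z) then show ?case using Rv_aut[OF s] by (meson rtranclp.rtrancl_into_rtrancl)
  qed simp
qed

lemma tcomp_aut: "tree_aut \<sigma> \<Longrightarrow> tcomp (\<sigma> u) (\<sigma> v) = \<sigma> ` tcomp u v"
proof -
  assume s: "tree_aut \<sigma>"
  have "y \<in> \<sigma> ` tcomp u v" if "y \<in> tcomp (\<sigma> u) (\<sigma> v)" for y
  proof -
    have "(Rv (\<sigma> u))\<^sup>*\<^sup>* (\<sigma> v) y" using that by (simp add: tcomp_Rv)
    then have "(Rv (inv \<sigma> (\<sigma> u)))\<^sup>*\<^sup>* (inv \<sigma> (\<sigma> v)) (inv \<sigma> y)" by (rule rtr_aut[OF aut_inv[OF s]])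
    then have "inv \<sigma> y \<in> tcomp u v" by (simp add: tcomp_Rv aut_inv1[OF s])
    then show ?thesis by (metis aut_inv2[OF s] imageI)
  qed
  moreover have "\<sigma> ` tcomp u v \<subseteq> tcomp (\<sigma> u) (\<sigma> v)"
    using rtr_aut[OF s] by (auto simp: tcomp_Rv)
  ultimately show ?thesis by blast
qed

lemma mem_tcomp_aut: "tree_aut \<sigma> \<Longrightarrow> \<sigma> x \<in> tcomp (\<sigma> u) (\<sigma> v) \<longleftrightarrow> x \<in> tcomp u v"
  proof -
  assume s: "tree_aut \<sigma>"
  show ?thesis unfolding tcomp_aut[OF s] by (rule inj_image_mem_iff[OF bij_is_inj[OF aut_bij[OF s]]])
qed

lemma ex1_aut:
  assumes s: "tree_aut \<sigma>" and e: "\<exists>!u. tadj v u \<and> x \<in> tcomp v u"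
  shows "\<exists>!u. tadj (\<sigma> v) u \<and> \<sigma> x \<in> tcomp (\<sigma> v) u"
proof -
  from e obtain u where u: "tadj v u \<and> x \<in> tcomp v u" by blast
  show ?thesis
  proof (rule ex1I[of _ "\<sigma> u"])
    show "tadj (\<sigma> v) (\<sigma> u) \<and> \<sigma> x \<in> tcomp (\<sigma> v) (\<sigma> u)"
      using u by (simp add: aut_tadj[OF s] mem_tcomp_aut[OF s])
    fix u' assume "tadj (\<sigma> v) u' \<and> \<sigma> x \<in> tcomp (\<sigma> v) u'"
    then have "tadj (\<sigma> v) (\<sigma> (inv \<sigma> u')) \<and> \<sigma> x \<in> tcomp (\<sigma> v) (\<sigma> (inv \<sigma> u'))"
      by (simp add: aut_inv2[OF s])
    then have "tadj v (inv \<sigma> u') \<and> x \<in> tcomp v (inv \<sigma> u')"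
      by (simp add: aut_tadj[OF s] mem_tcomp_aut[OF s])
    then have "inv \<sigma> u' = u" using e u by blast
    then show "u' = \<sigma> u" using aut_inv2[OF s] by metis
  qed
qed

lemma ex1_all: "v \<noteq> x \<Longrightarrow> \<exists>!u. tadj v u \<and> x \<in> tcomp v u"
proof -
  assume ne: "v \<noteq> x"
  let ?s = "Lmap x" let ?v = "Lmap (Linv x) v"
  have s: "tree_aut ?s" by (rule Lmap_aut)
  have "?v \<noteq> root0" using ne by (metis Lmap_Linv2 Lmap_root0)
  then have "\<exists>!u. tadj ?v u \<and> root0 \<in> tcomp ?v u" using ex1_root0 by blast
  from ex1_aut[OF s this] show ?thesis by (simp add: Lmap_Linv2 Lmap_root0)
qed

lemma tparent_char: "v \<noteq> x \<Longrightarrow> tadj v u \<Longrightarrow> x \<in> tcomp v u \<Longrightarrow> tparent x v = u"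
  proof -
  assume a: "v \<noteq> x" "tadj v u" "x \<in> tcomp v u"
  show ?thesis unfolding tparent_def by (rule the1_equality[OF ex1_all[OF a(1)]]) (use a in blast)
qed

lemma tparent_props: "v \<noteq> x \<Longrightarrow> tadj v (tparent x v) \<and> x \<in> tcomp v (tparent x v)"
  proof -
  assume a: "v \<noteq> x"
  show ?thesis unfolding tparent_def by (rule theI'[OF ex1_all[OF a(1)]])
qed

lemma tparent_aut: "tree_aut \<sigma> \<Longrightarrow> v \<noteq> x \<Longrightarrow> tparent (\<sigma> x) (\<sigma> v) = \<sigma> (tparent x v)"
  by (rule tparent_char) (auto simp: aut_inj aut_tadj mem_tcomp_aut tparent_props)

lemma tparent_root0: "v \<noteq> root0 \<Longrightarrow> tparent root0 v = par0 v"
  by (rule tparent_char) (auto simp: ex1_root0)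

definition leaf :: "nat \<Rightarrow> tvert" where "leaf c = Abs_tvert [c]"

lemma Rep_leaf: "c \<in> {0,1,2} \<Longrightarrow> Rep_tvert (leaf c) = [c]"
  unfolding leaf_def by (rule Abs_inv) (simp add: valid_def)

lemma leaf_ne_root0: "c \<in> {0,1,2} \<Longrightarrow> leaf c \<noteq> root0"
  by (metis Rep_leaf Rep_root0 list.distinct(1))

lemma par0_leaf: "c \<in> {0,1,2} \<Longrightarrow> par0 (leaf c) = root0"
  by (metis Rep_leaf Rep_par0 Rep_root0 Rep_tvert_inject butlast.simps(2))

lemma tadj_root0_leaf: "c \<in> {0,1,2} \<Longrightarrow> tadj root0 (leaf c)"
  by (simp add: tadj_def Rep_leaf)

lemma tparent_leaf_root: "c \<in> {0,1,2} \<Longrightarrow> tparent (leaf c) root0 = leaf c"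
proof (rule tparent_char)
  assume c: "c \<in> {0,1,2}"
  show "root0 \<noteq> leaf c" using leaf_ne_root0[OF c] by metis
  show "tadj root0 (leaf c)" using c by (rule tadj_root0_leaf)
qed (rule tcomp_refl)

lemma tparent_leaf: "c \<in> {0,1,2} \<Longrightarrow> v \<noteq> root0 \<Longrightarrow> v \<noteq> leaf c \<Longrightarrow> tparent (leaf c) v = par0 v"
proof (rule tparent_char)
  assume c: "c \<in> {0,1,2}" and v: "v \<noteq> root0" "v \<noteq> leaf c"
  show "v \<noteq> leaf c" "tadj v (par0 v)" by (fact v(2)) (rule tadj_par0[OF v(1)])
  have "root0 \<in> tcomp v (par0 v)" using ex1_root0[OF v(1)] by blast
  then show "leaf c \<in> tcomp v (par0 v)"
    by (rule tcomp_step) (use v c tadj_root0_leaf in auto)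
qed

lemma nbr_root0: "tadj root0 v \<Longrightarrow> \<exists>c\<in>{0,1,2}. v = leaf c"
proof -
  assume "tadj root0 v"
  then obtain c where c: "c \<in> {0,1,2}" "Rep_tvert v = stp [] c" unfolding tadj_stp by auto
  then have "Rep_tvert v = [c]" by (simp add: stp_def)
  then show ?thesis using c(1) by (metis Rep_leaf Rep_tvert_inject)
qed

lemma tadj_Lmap_leaf: "tadj x y \<Longrightarrow> \<exists>c\<in>{0,1,2}. y = Lmap x (leaf c)"
proof -
  assume a: "tadj x y"
  have "tadj (Lmap (Linv x) x) (Lmap (Linv x) y)" using a by (rule Lmap_tadj)
  then have "tadj root0 (Lmap (Linv x) y)"
    by (metis Lmap_Linv1 Lmap_root0)
  then obtain c where "c \<in> {0,1,2}" "Lmap (Linv x) y = leaf c" using nbr_root0 by blast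
  then show ?thesis by (metis Lmap_Linv2)
qed

definition cyl :: "tvert set \<Rightarrow> (tvert \<Rightarrow> nat) \<Rightarrow> (tvert \<Rightarrow> nat) set" where
  "cyl S \<eta> = {\<phi> \<in> space cfg_space. \<forall>v\<in>S. \<phi> v = \<eta> v}"

lemma space_cfg: "space cfg_space = {\<phi>. \<forall>v. \<phi> v \<in> hnodes}"
  unfolding cfg_space_def by (auto simp: space_PiM PiE_def Pi_def extensional_def)

lemma hnodes_finite[simp]: "finite hnodes" by (simp add: hnodes_def)

lemma meas_coord: "(\<lambda>\<phi>. \<phi> v) \<in> measurable cfg_space (count_space hnodes)"
  unfolding cfg_space_def by (rule measurable_component_singleton) simp

lemma coord_set: "{\<phi> \<in> space cfg_space. \<phi> v = j} \<in> sets cfg_space"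
proof -
  have "{\<phi> \<in> space cfg_space. \<phi> v = j} = (\<lambda>\<phi>. \<phi> v) -` ({j} \<inter> hnodes) \<inter> space cfg_space"
    by (auto simp: space_cfg)
  moreover have "(\<lambda>\<phi>. \<phi> v) -` ({j} \<inter> hnodes) \<inter> space cfg_space \<in> sets cfg_space"
    by (rule measurable_sets[OF meas_coord]) simp
  ultimately show ?thesis by simp
qed

lemma cyl_sets: "finite S \<Longrightarrow> cyl S \<eta> \<in> sets cfg_space"
proof -
  assume f: "finite S"
  show ?thesis
  proof (cases "S = {}")
    case True then show ?thesis by (simp add: cyl_def)
  next
    case False
    have "cyl S \<eta> = (\<Inter>v\<in>S. {\<phi> \<in> space cfg_space. \<phi> v = \<eta> v})" using False by (auto simp: cyl_def)
    then show ?thesis using f False coord_set by (auto intro!: sets.finite_INT)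
  qed
qed

definition rooted :: "tvert \<Rightarrow> tvert set \<Rightarrow> bool" where
  "rooted x S \<longleftrightarrow> finite S \<and> x \<in> S \<and> (\<forall>v\<in>S - {x}. tparent x v \<in> S)"

definition wform :: "(nat \<Rightarrow> real) \<Rightarrow> tvert \<Rightarrow> tvert set \<Rightarrow> (tvert \<Rightarrow> nat) \<Rightarrow> real" where
  "wform w x S \<eta> = root_prob w (\<eta> x) * (\<Prod>v\<in>S - {x}. step_prob w (\<eta> (tparent x v)) (\<eta> v))"

lemma walk_law_iff: "walk_law w x \<mu> \<longleftrightarrow> prob_space \<mu> \<and> sets \<mu> = sets cfg_space \<and>
   (\<forall>S \<eta>. rooted x S \<longrightarrow> measure \<mu> (cyl S \<eta>) = wform w x S \<eta>)"
proof -
  have "sets \<mu> = sets cfg_space \<Longrightarrow> space \<mu> = space cfg_space" by (rule sets_eq_imp_space_eq)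
  then show ?thesis unfolding walk_law_def rooted_def wform_def cyl_def by auto
qed

lemma meas_comp_aut: "(\<lambda>\<phi>. \<phi> \<circ> \<sigma>) \<in> measurable cfg_space cfg_space"
proof -
  have "(\<lambda>\<phi> i. \<phi> (\<sigma> i)) \<in> measurable cfg_space (Pi\<^sub>M UNIV (\<lambda>_. count_space hnodes))"
    by (rule measurable_PiM_single') (auto simp: meas_coord space_cfg)
  then show ?thesis by (simp add: cfg_space_def comp_def)
qed

lemma measurable_cfg_cong: "sets \<mu> = sets cfg_space \<Longrightarrow> f \<in> measurable cfg_space N \<Longrightarrow> f \<in> measurable \<mu> N"
  using measurable_cong_sets by blast

lemma walk_law_aut:
  assumes s: "tree_aut \<sigma>" and W: "walk_law w (\<sigma> x) \<mu>"
  shows "walk_law w x (distr \<mu> cfg_space (\<lambda>\<phi>. \<phi> \<circ> \<sigma>))"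
proof -
  have P: "prob_space \<mu>" and Se: "sets \<mu> = sets cfg_space"
    and F: "\<And>S \<eta>. rooted (\<sigma> x) S \<Longrightarrow> measure \<mu> (cyl S \<eta>) = wform w (\<sigma> x) S \<eta>"
    using W by (auto simp: walk_law_iff)
  have sp: "space \<mu> = space cfg_space" using Se by (rule sets_eq_imp_space_eq)
  have m: "(\<lambda>\<phi>. \<phi> \<circ> \<sigma>) \<in> measurable \<mu> cfg_space" using Se meas_comp_aut by (rule measurable_cfg_cong)
  have "prob_space (distr \<mu> cfg_space (\<lambda>\<phi>. \<phi> \<circ> \<sigma>))"
    using P m by (simp add: prob_space.prob_space_distr)
  moreover have "measure (distr \<mu> cfg_space (\<lambda>\<phi>. \<phi> \<circ> \<sigma>)) (cyl S \<eta>) = wform w x S \<eta>"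
    if R: "rooted x S" for S \<eta>
  proof -
    have fS: "finite S" using R by (simp add: rooted_def)
    have "measure (distr \<mu> cfg_space (\<lambda>\<phi>. \<phi> \<circ> \<sigma>)) (cyl S \<eta>) = measure \<mu> ((\<lambda>\<phi>. \<phi> \<circ> \<sigma>) -` cyl S \<eta> \<inter> space \<mu>)"
      by (rule measure_distr[OF m cyl_sets[OF fS]])
    also have "(\<lambda>\<phi>. \<phi> \<circ> \<sigma>) -` cyl S \<eta> \<inter> space \<mu> = cyl (\<sigma> ` S) (\<eta> \<circ> inv \<sigma>)"
      unfolding sp by (auto simp: cyl_def space_cfg aut_inv1[OF s])
    also have "measure \<mu> (cyl (\<sigma> ` S) (\<eta> \<circ> inv \<sigma>)) = wform w (\<sigma> x) (\<sigma> ` S) (\<eta> \<circ> inv \<sigma>)"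
    proof (rule F)
      show "rooted (\<sigma> x) (\<sigma> ` S)" using R unfolding rooted_def
        by (auto simp: tparent_aut[OF s] aut_inj[OF s])
    qed
    also have "\<dots> = wform w x S \<eta>"
    proof -
      have e: "\<sigma> ` S - {\<sigma> x} = \<sigma> ` (S - {x})" by (auto simp: aut_inj[OF s])
      have i: "inj_on \<sigma> (S - {x})" using bij_is_inj[OF aut_bij[OF s]] by (auto simp: inj_on_def)
      show ?thesis unfolding wform_def e prod.reindex[OF i]
        by (auto simp: aut_inv1[OF s] tparent_aut[OF s] intro!: prod.cong)
    qed
    finally show ?thesis .
  qed
  ultimately show ?thesis by (simp add: walk_law_iff)
qed

definition ball :: "nat \<Rightarrow> tvert set" where "ball R = {v. length (Rep_tvert v) \<le> R}"

lemma finite_ball: "finite (ball R)"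
proof -
  have "Rep_tvert ` ball R \<subseteq> {xs. set xs \<subseteq> {0,1,2} \<and> length xs \<le> R}"
    using set_Rep by (auto simp: ball_def)
  then have "finite (Rep_tvert ` ball R)"
    by (rule finite_subset) (rule finite_lists_length_le, simp)
  then show ?thesis by (rule finite_imageD) (simp add: inj_on_def Rep_tvert_inject)
qed

lemma root0_ball: "root0 \<in> ball R" by (simp add: ball_def)

lemma rooted_ball: "rooted root0 (ball R)"
  unfolding rooted_def using finite_ball root0_ball
  by (auto simp: tparent_root0 ball_def Rep_par0)

definition Eg :: "nat \<Rightarrow> (tvert \<Rightarrow> nat) set set" where
  "Eg R = {cyl (ball R') \<eta> | R' \<eta>. R \<le> R'}"

lemma cyl_empty: "0 \<notin> hnodes" by (simp add: hnodes_def)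

lemma cyl_is_empty: "v \<in> S \<Longrightarrow> \<eta> v \<notin> hnodes \<Longrightarrow> cyl S \<eta> = {}"
proof -
  assume a: "v \<in> S" "\<eta> v \<notin> hnodes"
  have "\<phi> \<notin> cyl S \<eta>" for \<phi>
  proof
    assume "\<phi> \<in> cyl S \<eta>"
    then have "\<phi> v = \<eta> v" "\<phi> v \<in> hnodes" using a(1) unfolding cyl_def space_cfg by blast+
    then show False using a(2) by simp
  qed
  then show ?thesis by blast
qed

lemma cyl_Int: "cyl S1 \<eta>1 \<inter> cyl S2 \<eta>2 =
   (if \<forall>v\<in>S1 \<inter> S2. \<eta>1 v = \<eta>2 v then cyl (S1 \<union> S2) (\<lambda>v. if v \<in> S1 then \<eta>1 v else \<eta>2 v) else {})"
  by (auto simp: cyl_def)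

lemma ball_mono: "a \<le> b \<Longrightarrow> ball a \<subseteq> ball b" by (auto simp: ball_def)

lemma Int_stable_Eg: "Int_stable (Eg R)"
proof (rule Int_stableI)
  fix A B assume "A \<in> Eg R" "B \<in> Eg R"
  then obtain a b \<eta>1 \<eta>2 where ab: "A = cyl (ball a) \<eta>1" "B = cyl (ball b) \<eta>2" "R \<le> a" "R \<le> b"
    by (auto simp: Eg_def)
  have u: "ball a \<union> ball b = ball (max a b)" by (auto simp: ball_def)
  show "A \<inter> B \<in> Eg R"
  proof (cases "\<forall>v\<in>ball a \<inter> ball b. \<eta>1 v = \<eta>2 v")
    case True
    then show ?thesis unfolding ab cyl_Int Eg_def u using ab(3) by auto
  next
    case False
    have "cyl (ball R) (\<lambda>_. 0) = {}" by (rule cyl_is_empty[OF root0_ball]) (simp add: hnodes_def)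
    then show ?thesis unfolding ab cyl_Int Eg_def using False
      by (auto intro!: exI[of _ R] exI[of _ "\<lambda>_. 0::nat"])
  qed
qed

lemma Eg_Pow: "Eg R \<subseteq> Pow (space cfg_space)" by (auto simp: Eg_def cyl_def)

lemma Eg_sets: "Eg R \<subseteq> sets cfg_space" using cyl_sets finite_ball by (auto simp: Eg_def)

lemma sigma_fin_UN: "finite I \<Longrightarrow> E \<subseteq> Pow \<Omega> \<Longrightarrow> (\<And>i. i \<in> I \<Longrightarrow> A i \<in> sigma_sets \<Omega> E) \<Longrightarrow>
  (\<Union>i\<in>I. A i) \<in> sigma_sets \<Omega> E"
  using ring_of_sets.finite_UN[OF algebra.axioms(1)[OF sigma_algebra.axioms(1)[OF sigma_algebra_sigma_sets]]] by blast

lemma cyl_decomp: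
  assumes "finite D" "X \<subseteq> PiE D (\<lambda>_. hnodes)"
  shows "{\<phi> \<in> space cfg_space. restrict \<phi> D \<in> X} = (\<Union>\<eta>\<in>X. cyl D \<eta>)"
proof (intro set_eqI iffI)
  fix \<phi> assume "\<phi> \<in> {\<phi> \<in> space cfg_space. restrict \<phi> D \<in> X}"
  then show "\<phi> \<in> (\<Union>\<eta>\<in>X. cyl D \<eta>)" by (auto simp: cyl_def intro!: bexI[of _ "restrict \<phi> D"])
next
  fix \<phi> assume "\<phi> \<in> (\<Union>\<eta>\<in>X. cyl D \<eta>)"
  then obtain \<eta> where e: "\<eta> \<in> X" "\<phi> \<in> cyl D \<eta>" by blast
  then have "restrict \<phi> D = \<eta>" using assms(2) by (auto simp: cyl_def PiE_def extensional_def fun_eq_iff)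
  then show "\<phi> \<in> {\<phi> \<in> space cfg_space. restrict \<phi> D \<in> X}" using e by (auto simp: cyl_def)
qed

lemma space_cfg_PiE: "space cfg_space = PiE UNIV (\<lambda>_. hnodes)"
  unfolding cfg_space_def by (simp add: space_PiM)

lemma sets_Eg: "sets cfg_space = sigma_sets (space cfg_space) (Eg R)"
proof -
  have S: "sets cfg_space = sigma_sets (space cfg_space)
     {{f\<in>PiE UNIV (\<lambda>_. hnodes). f i \<in> A} | i A. i \<in> UNIV \<and> A \<in> sets (count_space hnodes)}"
    unfolding cfg_space_def sets_PiM_single by (simp add: space_PiM)
  show ?thesis
  proof
    show "sigma_sets (space cfg_space) (Eg R) \<subseteq> sets cfg_space"
      by (rule sets.sigma_sets_subset[OF Eg_sets])
    show "sets cfg_space \<subseteq> sigma_sets (space cfg_space) (Eg R)"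
      unfolding S
    proof (rule sigma_sets_mono, safe)
      fix i A assume A: "A \<in> sets (count_space hnodes)"
      let ?R = "max R (length (Rep_tvert i))"
      let ?X = "{\<eta> \<in> PiE (ball ?R) (\<lambda>_. hnodes). \<eta> i \<in> A}"
      have iR: "i \<in> ball ?R" by (simp add: ball_def)
      have "{f\<in>PiE UNIV (\<lambda>_. hnodes). f i \<in> A} = {\<phi> \<in> space cfg_space. restrict \<phi> (ball ?R) \<in> ?X}"
        using iR by (auto simp: space_cfg_PiE)
      also have "\<dots> = (\<Union>\<eta>\<in>?X. cyl (ball ?R) \<eta>)" by (rule cyl_decomp) (auto simp: finite_ball)
      also have "\<dots> \<in> sigma_sets (space cfg_space) (Eg R)"
      proof (rule sigma_fin_UN[OF _ Eg_Pow])
        show "finite ?X" by (rule finite_subset[of _ "PiE (ball ?R) (\<lambda>_. hnodes)"]) (auto intro: finite_PiE finite_ball)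
        fix \<eta> show "cyl (ball ?R) \<eta> \<in> sigma_sets (space cfg_space) (Eg R)"
          by (rule sigma_sets.Basic) (auto simp: Eg_def)
      qed
      finally show "{f\<in>PiE UNIV (\<lambda>_. hnodes). f i \<in> A} \<in> sigma_sets (space cfg_space) (Eg R)" .
    qed
  qed
qed

lemma space_cover: "space cfg_space = (\<Union>\<eta>\<in>PiE (ball R) (\<lambda>_. hnodes). cyl (ball R) \<eta>)"
proof -
  have "space cfg_space = {\<phi> \<in> space cfg_space. restrict \<phi> (ball R) \<in> PiE (ball R) (\<lambda>_. hnodes)}"
    by (auto simp: space_cfg)
  also have "\<dots> = (\<Union>\<eta>\<in>PiE (ball R) (\<lambda>_. hnodes). cyl (ball R) \<eta>)"
    by (rule cyl_decomp) (auto simp: finite_ball)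
  finally show ?thesis .
qed

lemma measure_eq_Eg:
  assumes "finite_measure \<mu>" "sets \<mu> = sets cfg_space" "sets \<nu> = sets cfg_space"
    and "\<And>X. X \<in> Eg R \<Longrightarrow> emeasure \<mu> X = emeasure \<nu> X"
  shows "\<mu> = \<nu>"
proof (rule measure_eqI_generator_eq_countable[OF Int_stable_Eg Eg_Pow assms(4)])
  show "sets \<mu> = sigma_sets (space cfg_space) (Eg R)" "sets \<nu> = sigma_sets (space cfg_space) (Eg R)"
    using assms(2,3) sets_Eg by auto
  let ?A = "(\<lambda>\<eta>. cyl (ball R) \<eta>) ` PiE (ball R) (\<lambda>_. hnodes)"
  show "?A \<subseteq> Eg R" by (auto simp: Eg_def)
  show "\<Union>?A = space cfg_space" using space_cover by simp
  show "countable ?A" by (intro countable_finite finite_imageI finite_PiE finite_ball) simp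
  show "emeasure \<mu> a \<noteq> \<infinity>" for a using assms(1) by (simp add: finite_measure.emeasure_finite)
qed

lemma uniq_root0:
  assumes "walk_law w root0 \<mu>" "walk_law w root0 \<nu>"
  shows "\<mu> = \<nu>"
proof -
  have P: "prob_space \<mu>" "prob_space \<nu>" "sets \<mu> = sets cfg_space" "sets \<nu> = sets cfg_space"
    and F: "\<And>S \<eta>. rooted root0 S \<Longrightarrow> measure \<mu> (cyl S \<eta>) = wform w root0 S \<eta>"
           "\<And>S \<eta>. rooted root0 S \<Longrightarrow> measure \<nu> (cyl S \<eta>) = wform w root0 S \<eta>"
    using assms by (auto simp: walk_law_iff)
  show ?thesis
  proof (rule measure_eq_Eg[of \<mu> \<nu> 0])
    show "finite_measure \<mu>" using P(1) by (simp add: prob_space.finite_measure)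
    fix X assume "X \<in> Eg 0"
    then obtain R' \<eta> where X: "X = cyl (ball R') \<eta>" by (auto simp: Eg_def)
    have "emeasure \<mu> X = measure \<mu> X" using P(1) by (simp add: finite_measure.emeasure_eq_measure prob_space.finite_measure)
    also have "\<dots> = measure \<nu> X" unfolding X using F rooted_ball by simp
    also have "\<dots> = emeasure \<nu> X" using P(2) by (simp add: finite_measure.emeasure_eq_measure prob_space.finite_measure)
    finally show "emeasure \<mu> X = emeasure \<nu> X" .
  qed (use P in auto)
qed

definition wposi :: "(nat \<Rightarrow> real) \<Rightarrow> bool" where "wposi w \<longleftrightarrow> (\<forall>i\<in>hnodes. w i > 0)"

lemma hadj_sym: "hadj i j \<longleftrightarrow> hadj j i" unfolding hadj_def by (auto simp: insert_commute)
lemma hadj_hn: "hadj i j \<Longrightarrow> i \<in> hnodes \<and> j \<in> hnodes" unfolding hadj_def by auto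
lemma hadj_refl: "i \<in> hnodes \<Longrightarrow> hadj i i" unfolding hadj_def by auto
lemma hN_sub: "hN i \<subseteq> hnodes" by (auto simp: hN_def)

lemma hz_pos: "wposi w \<Longrightarrow> i \<in> hnodes \<Longrightarrow> hz w i > 0"
proof -
  assume w: "wposi w" and i: "i \<in> hnodes"
  have "i \<in> hN i" using i by (simp add: hN_def hadj_refl)
  moreover have "finite (hN i)" using finite_subset[OF hN_sub hnodes_finite] .
  ultimately show ?thesis unfolding hz_def using w hN_sub
    by (intro sum_pos) (auto simp: wposi_def)
qed

definition Kc :: "(nat \<Rightarrow> real) \<Rightarrow> real" where "Kc w = (\<Sum>k\<in>hnodes. w k * hz w k)"

lemma Kc_pos: "wposi w \<Longrightarrow> Kc w > 0"
  unfolding Kc_def using hz_pos by (intro sum_pos) (auto simp: wposi_def hnodes_def)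

lemma root_prob_alt: "root_prob w i = (if i \<in> hnodes then w i * hz w i / Kc w else 0)"
  by (simp add: root_prob_def Kc_def)

lemma root_nonneg: "wposi w \<Longrightarrow> root_prob w i \<ge> 0"
proof -
  assume w: "wposi w"
  show ?thesis
  proof (cases "i \<in> hnodes")
    case True
    then have "w i > 0" "hz w i > 0" "Kc w > 0" using w hz_pos Kc_pos by (auto simp: wposi_def)
    then show ?thesis using True by (simp add: root_prob_alt)
  qed (simp add: root_prob_alt)
qed

lemma step_nonneg: "wposi w \<Longrightarrow> step_prob w i j \<ge> 0"
  using hz_pos hadj_hn by (auto simp: step_prob_def wposi_def less_imp_le)

lemma step_sum: "wposi w \<Longrightarrow> i \<in> hnodes \<Longrightarrow> (\<Sum>j\<in>hnodes. step_prob w i j) = 1"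
proof -
  assume w: "wposi w" and i: "i \<in> hnodes"
  have "(\<Sum>j\<in>hnodes. step_prob w i j) = (\<Sum>j\<in>hN i. w j / hz w i)"
    unfolding step_prob_def hN_def by (simp add: sum.inter_filter[symmetric])
  also have "\<dots> = (\<Sum>j\<in>hN i. w j) / hz w i" by (rule sum_divide_distrib[symmetric])
  also have "\<dots> = hz w i / hz w i" unfolding hz_def ..
  also have "\<dots> = 1" using hz_pos[OF w i] by simp
  finally show ?thesis .
qed

lemma balance: "wposi w \<Longrightarrow> root_prob w i * step_prob w i j = root_prob w j * step_prob w j i"
proof -
  assume w: "wposi w"
  show ?thesis
  proof (cases "hadj i j")
    case True
    then have h: "i \<in> hnodes" "j \<in> hnodes" "hadj j i" using hadj_hn hadj_sym by auto
    have "hz w i > 0" "hz w j > 0" using hz_pos[OF w] h by auto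
    then show ?thesis using True h by (simp add: root_prob_alt step_prob_def)
  next
    case False then show ?thesis using hadj_sym by (simp add: step_prob_def)
  qed
qed

lemma flip_case1:
  assumes c: "c \<in> {0,1,2}" and R: "rooted (leaf c) S" and r: "root0 \<in> S" and w: "wposi w"
  shows "rooted root0 S \<and> wform w root0 S \<eta> = wform w (leaf c) S \<eta>"
proof
  let ?l = "leaf c"
  have l: "?l \<in> S" "?l \<noteq> root0" "finite S" using R leaf_ne_root0[OF c] by (auto simp: rooted_def)
  have cl: "\<And>v. v \<in> S - {?l} \<Longrightarrow> tparent ?l v \<in> S" using R by (auto simp: rooted_def)
  show "rooted root0 S" unfolding rooted_def
  proof (intro conjI ballI)
    fix v assume v: "v \<in> S - {root0}"
    show "tparent root0 v \<in> S"
    proof (cases "v = ?l")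
      case True then show ?thesis using r c by (simp add: tparent_root0 leaf_ne_root0 par0_leaf)
    next
      case False then show ?thesis using cl[of v] v c by (simp add: tparent_root0 tparent_leaf)
    qed
  qed (use l r in auto)
  have e1: "S - {root0} = insert ?l (S - {root0, ?l})" using l by auto
  have e2: "S - {?l} = insert root0 (S - {root0, ?l})" using l r by auto
  have pr: "(\<Prod>v\<in>S - {root0, ?l}. step_prob w (\<eta> (tparent root0 v)) (\<eta> v)) =
            (\<Prod>v\<in>S - {root0, ?l}. step_prob w (\<eta> (tparent ?l v)) (\<eta> v))"
    using c by (intro prod.cong) (auto simp: tparent_root0 tparent_leaf)
  let ?P = "\<Prod>v\<in>S - {root0, ?l}. step_prob w (\<eta> (tparent ?l v)) (\<eta> v)"
  have "wform w root0 S \<eta> = root_prob w (\<eta> root0) * (step_prob w (\<eta> (tparent root0 ?l)) (\<eta> ?l) *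
      (\<Prod>v\<in>S - {root0, ?l}. step_prob w (\<eta> (tparent root0 v)) (\<eta> v)))"
    unfolding wform_def e1 by (subst prod.insert) (use l in auto)
  also have "\<dots> = root_prob w (\<eta> root0) * step_prob w (\<eta> root0) (\<eta> ?l) * ?P"
    unfolding pr using tparent_root0[OF l(2)] par0_leaf[OF c] by simp
  also have "\<dots> = root_prob w (\<eta> ?l) * step_prob w (\<eta> ?l) (\<eta> root0) * ?P"
    using balance[OF w] by simp
  also have "\<dots> = wform w ?l S \<eta>"
    unfolding wform_def e2 by (subst prod.insert) (use l tparent_leaf_root[OF c] in auto)
  finally show "wform w root0 S \<eta> = wform w ?l S \<eta>" .
qed

lemma flip:
  assumes W: "walk_law w root0 \<mu>" and c: "c \<in> {0,1,2}" and w: "wposi w"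
  shows "walk_law w (leaf c) \<mu>"
proof -
  let ?l = "leaf c"
  have P: "prob_space \<mu>" "sets \<mu> = sets cfg_space"
    and F: "\<And>S \<eta>. rooted root0 S \<Longrightarrow> measure \<mu> (cyl S \<eta>) = wform w root0 S \<eta>"
    using W by (auto simp: walk_law_iff)
  interpret prob_space \<mu> by (rule P(1))
  have case1: "measure \<mu> (cyl S \<eta>) = wform w ?l S \<eta>" if "rooted ?l S" "root0 \<in> S" for S \<eta>
    using flip_case1[OF c that w] F by simp
  have "measure \<mu> (cyl S \<eta>) = wform w ?l S \<eta>" if R: "rooted ?l S" for S \<eta>
  proof (cases "root0 \<in> S")
    case True then show ?thesis using case1 R by simp
  next
    case False
    let ?S = "insert root0 S"
    have fS: "finite S" "?l \<in> S" using R by (auto simp: rooted_def)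
    have RS: "rooted ?l ?S" using R c unfolding rooted_def by (auto simp: tparent_leaf_root)
    have U: "cyl S \<eta> = (\<Union>j\<in>hnodes. cyl ?S (\<eta>(root0 := j)))"
      using False by (auto simp: cyl_def space_cfg)
    have "measure \<mu> (cyl S \<eta>) = (\<Sum>j\<in>hnodes. measure \<mu> (cyl ?S (\<eta>(root0 := j))))"
      unfolding U
    proof (rule finite_measure_finite_Union)
      show "(\<lambda>j. cyl ?S (\<eta>(root0 := j))) ` hnodes \<subseteq> sets \<mu>" using P(2) fS by (auto intro: cyl_sets)
      show "disjoint_family_on (\<lambda>j. cyl ?S (\<eta>(root0 := j))) hnodes"
        by (auto simp: disjoint_family_on_def cyl_def)
    qed simp
    also have "\<dots> = (\<Sum>j\<in>hnodes. wform w ?l ?S (\<eta>(root0 := j)))"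
      using case1[OF RS] by simp
    also have "\<dots> = (\<Sum>j\<in>hnodes. root_prob w (\<eta> ?l) * step_prob w (\<eta> ?l) j *
        (\<Prod>v\<in>S - {?l}. step_prob w (\<eta> (tparent ?l v)) (\<eta> v)))"
    proof (rule sum.cong[OF refl])
      fix j assume j: "j \<in> hnodes"
      define \<eta>' where "\<eta>' = \<eta>(root0 := j)"
      have h1: "\<eta>' root0 = j" "\<And>v. v \<noteq> root0 \<Longrightarrow> \<eta>' v = \<eta> v" by (auto simp: \<eta>'_def)
      have e: "?S - {?l} = insert root0 (S - {?l})" using leaf_ne_root0[OF c] by auto
      have pr: "(\<Prod>v\<in>S - {?l}. step_prob w (\<eta>' (tparent ?l v)) (\<eta>' v)) =
                (\<Prod>v\<in>S - {?l}. step_prob w (\<eta> (tparent ?l v)) (\<eta> v))"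
      proof (rule prod.cong[OF refl])
        fix v assume v: "v \<in> S - {?l}"
        then have "tparent ?l v \<in> S" using R by (auto simp: rooted_def)
        then show "step_prob w (\<eta>' (tparent ?l v)) (\<eta>' v) =
                   step_prob w (\<eta> (tparent ?l v)) (\<eta> v)"
          using False v h1(2)[of v] h1(2)[of "tparent ?l v"] by (metis DiffD1)
      qed
      have "wform w ?l ?S \<eta>' = root_prob w (\<eta>' ?l) * (step_prob w (\<eta>' (tparent ?l root0)) (\<eta>' root0) *
          (\<Prod>v\<in>S - {?l}. step_prob w (\<eta>' (tparent ?l v)) (\<eta>' v)))"
        unfolding wform_def e by (subst prod.insert) (use fS False in auto)
      also have "\<dots> = root_prob w (\<eta> ?l) * step_prob w (\<eta> ?l) j *
        (\<Prod>v\<in>S - {?l}. step_prob w (\<eta> (tparent ?l v)) (\<eta> v))"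
        unfolding pr tparent_leaf_root[OF c] h1(1) h1(2)[OF leaf_ne_root0[OF c]] by simp
      finally show "wform w ?l ?S (\<eta>(root0 := j)) = root_prob w (\<eta> ?l) * step_prob w (\<eta> ?l) j *
        (\<Prod>v\<in>S - {?l}. step_prob w (\<eta> (tparent ?l v)) (\<eta> v))" unfolding \<eta>'_def .
    qed
    also have "\<dots> = root_prob w (\<eta> ?l) * (\<Sum>j\<in>hnodes. step_prob w (\<eta> ?l) j) *
        (\<Prod>v\<in>S - {?l}. step_prob w (\<eta> (tparent ?l v)) (\<eta> v))"
      by (simp add: sum_distrib_left sum_distrib_right)
    also have "\<dots> = wform w ?l S \<eta>"
    proof (cases "\<eta> ?l \<in> hnodes")
      case True then show ?thesis using step_sum[OF w True] by (simp add: wform_def)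
    next
      case False then show ?thesis by (simp add: wform_def root_prob_def)
    qed
    finally show ?thesis .
  qed
  then show ?thesis using P by (simp add: walk_law_iff)
qed

lemma distr_back:
  assumes s: "tree_aut \<sigma>" and S: "sets \<mu> = sets cfg_space"
  shows "distr (distr \<mu> cfg_space (\<lambda>\<phi>. \<phi> \<circ> \<sigma>)) cfg_space (\<lambda>\<phi>. \<phi> \<circ> inv \<sigma>) = \<mu>"
proof -
  have m: "(\<lambda>\<phi>. \<phi> \<circ> \<sigma>) \<in> measurable \<mu> cfg_space" using S meas_comp_aut by (rule measurable_cfg_cong)
  have "distr (distr \<mu> cfg_space (\<lambda>\<phi>. \<phi> \<circ> \<sigma>)) cfg_space (\<lambda>\<phi>. \<phi> \<circ> inv \<sigma>) =
        distr \<mu> cfg_space ((\<lambda>\<phi>. \<phi> \<circ> inv \<sigma>) \<circ> (\<lambda>\<phi>. \<phi> \<circ> \<sigma>))"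
    by (rule distr_distr[OF meas_comp_aut m])
  also have "(\<lambda>\<phi>. \<phi> \<circ> inv \<sigma>) \<circ> (\<lambda>\<phi>. \<phi> \<circ> \<sigma>) = (\<lambda>\<phi>. \<phi>)"
    by (auto simp: fun_eq_iff aut_inv2[OF s])
  also have "distr \<mu> cfg_space (\<lambda>\<phi>. \<phi>) = \<mu>" by (rule distr_id2) (use S in simp)
  finally show ?thesis .
qed

lemma walk_law_sets: "walk_law w x \<mu> \<Longrightarrow> sets \<mu> = sets cfg_space" by (simp add: walk_law_def)

lemma all_roots:
  assumes W: "walk_law w root0 \<mu>" and w: "wposi w"
  shows "walk_law w y \<mu>"
proof (induction "length (Rep_tvert y)" arbitrary: y)
  case 0 then have "y = root0" by (metis Rep_root0 Rep_tvert_inject length_0_conv)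
  then show ?case using W by simp
next
  case (Suc n)
  then have ne: "y \<noteq> root0" by (metis Rep_root0 list.size(3) nat.distinct(1))
  let ?x = "par0 y"
  have Wx: "walk_law w ?x \<mu>" using Suc by (simp add: Rep_par0)
  have "tadj ?x y" using tadj_par0[OF ne] tadj_sym by blast
  then obtain c where c: "c \<in> {0,1,2}" "y = Lmap ?x (leaf c)" using tadj_Lmap_leaf by blast
  let ?s = "Lmap ?x"
  have s: "tree_aut ?s" by (rule Lmap_aut)
  have "walk_law w (?s root0) \<mu>" using Wx by (simp add: Lmap_root0)
  then have "walk_law w root0 (distr \<mu> cfg_space (\<lambda>\<phi>. \<phi> \<circ> ?s))" by (rule walk_law_aut[OF s])
  then have "walk_law w (leaf c) (distr \<mu> cfg_space (\<lambda>\<phi>. \<phi> \<circ> ?s))" using c(1) w by (rule flip)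
  moreover have "inv ?s y = leaf c" using c(2) aut_inv1[OF s] by metis
  ultimately have "walk_law w (inv ?s y) (distr \<mu> cfg_space (\<lambda>\<phi>. \<phi> \<circ> ?s))" by simp
  then have "walk_law w y (distr (distr \<mu> cfg_space (\<lambda>\<phi>. \<phi> \<circ> ?s)) cfg_space (\<lambda>\<phi>. \<phi> \<circ> inv ?s))"
    by (rule walk_law_aut[OF aut_inv[OF s]])
  then show ?case using distr_back[OF s walk_law_sets[OF W]] by simp
qed

lemma invariance:
  assumes W: "walk_law w root0 \<mu>" and w: "wposi w" and s: "tree_aut \<sigma>"
  shows "distr \<mu> cfg_space (\<lambda>\<phi>. \<phi> \<circ> \<sigma>) = \<mu>"
proof -
  have "walk_law w (\<sigma> root0) \<mu>" by (rule all_roots[OF W w])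
  then have "walk_law w root0 (distr \<mu> cfg_space (\<lambda>\<phi>. \<phi> \<circ> \<sigma>))" by (rule walk_law_aut[OF s])
  then show ?thesis using W by (rule uniq_root0)
qed

lemma all_eq:
  assumes W: "walk_law w root0 \<mu>0" and w: "wposi w" and V: "walk_law w x \<mu>"
  shows "\<mu> = \<mu>0"
proof -
  let ?s = "Lmap x"
  have s: "tree_aut ?s" by (rule Lmap_aut)
  have "walk_law w (?s root0) \<mu>" using V by (simp add: Lmap_root0)
  then have "walk_law w root0 (distr \<mu> cfg_space (\<lambda>\<phi>. \<phi> \<circ> ?s))" by (rule walk_law_aut[OF s])
  then have e: "distr \<mu> cfg_space (\<lambda>\<phi>. \<phi> \<circ> ?s) = \<mu>0" using W by (rule uniq_root0)
  have "\<mu> = distr (distr \<mu> cfg_space (\<lambda>\<phi>. \<phi> \<circ> ?s)) cfg_space (\<lambda>\<phi>. \<phi> \<circ> inv ?s)"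
    using distr_back[OF s walk_law_sets[OF V]] by simp
  also have "\<dots> = \<mu>0" unfolding e by (rule invariance[OF W w aut_inv[OF s]])
  finally show ?thesis .
qed

lemma exists_all:
  assumes W: "walk_law w root0 \<mu>0" and w: "wposi w"
  shows "\<exists>\<mu>. walk_law w x \<mu>"
  using all_roots[OF W w] by blast

lemma embed_ok:
  fixes f :: "nat \<Rightarrow> real"
  assumes nn: "\<And>x. 0 \<le> f x" and supp: "\<And>x. x \<notin> hnodes \<Longrightarrow> f x = 0" and s: "(\<Sum>k\<in>hnodes. f k) = 1"
  shows "pmf (embed_pmf f) x = f x" "set_pmf (embed_pmf f) \<subseteq> hnodes"
proof -
  have "(\<integral>\<^sup>+x. ennreal (f x) \<partial>count_space UNIV) = (\<Sum>k\<in>hnodes. ennreal (f k))"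
    by (rule nn_integral_count_space') (auto simp: supp)
  also have "\<dots> = 1" using s nn by (simp add: sum_ennreal)
  finally have P: "(\<integral>\<^sup>+x. ennreal (f x) \<partial>count_space UNIV) = 1" .
  show "pmf (embed_pmf f) x = f x" by (rule pmf_embed_pmf[OF nn P])
  show "set_pmf (embed_pmf f) \<subseteq> hnodes" using set_embed_pmf[OF nn P] supp by auto
qed

lemma root_sum: "wposi w \<Longrightarrow> (\<Sum>k\<in>hnodes. root_prob w k) = 1"
proof -
  assume w: "wposi w"
  have "(\<Sum>k\<in>hnodes. root_prob w k) = (\<Sum>k\<in>hnodes. w k * hz w k / Kc w)" by (simp add: root_prob_alt)
  also have "\<dots> = Kc w / Kc w" unfolding sum_divide_distrib[symmetric] Kc_def ..
  also have "\<dots> = 1" using Kc_pos[OF w] by simp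
  finally show ?thesis .
qed

definition rp :: "(nat \<Rightarrow> real) \<Rightarrow> nat pmf" where "rp w = embed_pmf (root_prob w)"
definition sp :: "(nat \<Rightarrow> real) \<Rightarrow> nat \<Rightarrow> nat pmf" where
  "sp w i = (if i \<in> hnodes then embed_pmf (step_prob w i) else return_pmf 1)"

lemma rp_ok: "wposi w \<Longrightarrow> pmf (rp w) x = root_prob w x \<and> set_pmf (rp w) \<subseteq> hnodes"
proof -
  assume w: "wposi w"
  have supp: "\<And>x. x \<notin> hnodes \<Longrightarrow> root_prob w x = 0" by (simp add: root_prob_def)
  show ?thesis unfolding rp_def using embed_ok[OF root_nonneg[OF w] supp root_sum[OF w]] by blast
qed

lemma sp_ok: "wposi w \<Longrightarrow> i \<in> hnodes \<Longrightarrow> pmf (sp w i) x = step_prob w i x \<and> set_pmf (sp w i) \<subseteq> hnodes"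
proof -
  assume w: "wposi w" and i: "i \<in> hnodes"
  have supp: "\<And>x. x \<notin> hnodes \<Longrightarrow> step_prob w i x = 0" using hadj_hn by (auto simp: step_prob_def)
  show ?thesis unfolding sp_def using i embed_ok[OF step_nonneg[OF w] supp step_sum[OF w i]] by simp
qed

lemma sp_set: "wposi w \<Longrightarrow> set_pmf (sp w i) \<subseteq> hnodes"
  using sp_ok[of w i] by (cases "i \<in> hnodes") (auto simp: sp_def hnodes_def)

definition Mf :: "(nat \<Rightarrow> real) \<Rightarrow> nat list \<times> nat \<Rightarrow> nat measure" where
  "Mf w j = measure_pmf (if fst j = [] then rp w else sp w (snd j))"

definition PP :: "(nat \<Rightarrow> real) \<Rightarrow> (nat list \<times> nat \<Rightarrow> nat) measure" where
  "PP w = PiM UNIV (Mf w)"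

definition clamp :: "nat \<Rightarrow> nat" where "clamp j = (if j \<in> hnodes then j else 1)"
lemma clamp_in: "clamp j \<in> hnodes" by (simp add: clamp_def hnodes_def)

fun gg :: "(nat list \<times> nat \<Rightarrow> nat) \<Rightarrow> nat list \<Rightarrow> nat" where
  "gg \<omega> [] = clamp (\<omega> ([], 0))"
| "gg \<omega> (c # ys) = clamp (\<omega> (rev (c # ys), gg \<omega> ys))"

definition Phi :: "(nat list \<times> nat \<Rightarrow> nat) \<Rightarrow> tvert \<Rightarrow> nat" where
  "Phi \<omega> v = gg \<omega> (rev (Rep_tvert v))"

lemma gg_in: "gg \<omega> ys \<in> hnodes" by (cases ys) (auto simp: clamp_in)

lemma Phi_root: "Phi \<omega> root0 = clamp (\<omega> ([], 0))" by (simp add: Phi_def)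

lemma Phi_rec: "v \<noteq> root0 \<Longrightarrow> Phi \<omega> v = clamp (\<omega> (Rep_tvert v, Phi \<omega> (par0 v)))"
proof -
  assume "v \<noteq> root0"
  then obtain ys c where e: "Rep_tvert v = ys @ [c]" by (metis ne_root0 rev_exhaust)
  show ?thesis unfolding Phi_def Rep_par0 e by simp
qed

lemma sets_Mf: "sets (Mf w j) = UNIV" by (simp add: Mf_def)

lemma meas_clamp_coord: "(\<lambda>\<omega>. clamp (\<omega> j)) \<in> measurable (PP w) (count_space hnodes)"
proof -
  have "(\<lambda>\<omega>. \<omega> j) \<in> measurable (PP w) (Mf w j)" unfolding PP_def by (rule measurable_component_singleton) simp
  moreover have "clamp \<in> measurable (Mf w j) (count_space hnodes)"
    by (simp add: measurable_count_space_eq2 sets_Mf clamp_in)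
  ultimately show ?thesis by (rule measurable_compose[of _ _ "Mf w j"])
qed

lemma meas_gg: "(\<lambda>\<omega>. gg \<omega> ys) \<in> measurable (PP w) (count_space hnodes)"
proof (induction ys)
  case Nil then show ?case using meas_clamp_coord by simp
next
  case (Cons c ys)
  have "(\<lambda>\<omega>. (\<lambda>i \<omega>. clamp (\<omega> (rev (c # ys), i))) (gg \<omega> ys) \<omega>) \<in> measurable (PP w) (count_space hnodes)"
    by (rule measurable_compose_countable'[OF _ Cons]) (auto intro: meas_clamp_coord)
  then show ?case by simp
qed

lemma meas_Phi: "Phi \<in> measurable (PP w) cfg_space"
proof -
  have "(\<lambda>\<omega> v. Phi \<omega> v) \<in> measurable (PP w) (Pi\<^sub>M UNIV (\<lambda>_. count_space hnodes))"
    by (rule measurable_PiM_single') (auto simp: Phi_def meas_gg space_PiM gg_in)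
  then show ?thesis by (simp add: cfg_space_def)
qed

lemma prob_PP: "prob_space (PP w)"
  unfolding PP_def Mf_def by (rule prob_space_PiM) (simp add: prob_space_measure_pmf)

lemma space_PP: "space (PP w) = UNIV"
  by (simp add: PP_def space_PiM Mf_def)

definition mu0 :: "(nat \<Rightarrow> real) \<Rightarrow> (tvert \<Rightarrow> nat) measure" where
  "mu0 w = distr (PP w) cfg_space Phi"

lemma clamp_pre:
  assumes "set_pmf p \<subseteq> hnodes" "k \<in> hnodes"
  shows "emeasure (measure_pmf p) (clamp -` {k}) = pmf p k"
proof -
  have "clamp -` {k} \<inter> set_pmf p = {k} \<inter> set_pmf p" using assms by (auto simp: clamp_def)
  then have "emeasure (measure_pmf p) (clamp -` {k}) = emeasure (measure_pmf p) ({k} \<inter> set_pmf p)"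
    by (metis emeasure_Int_set_pmf)
  also have "\<dots> = pmf p k" by (simp add: emeasure_Int_set_pmf emeasure_pmf_single)
  finally show ?thesis .
qed

lemma wform_zero:
  assumes R: "rooted root0 S" and v: "v \<in> S" "\<eta> v \<notin> hnodes"
  shows "wform w root0 S \<eta> = 0"
proof (cases "v = root0")
  case True then show ?thesis using v by (simp add: wform_def root_prob_def)
next
  case False
  have "step_prob w (\<eta> (tparent root0 v)) (\<eta> v) = 0" using v hadj_hn by (auto simp: step_prob_def)
  moreover have "finite (S - {root0})" using R by (simp add: rooted_def)
  ultimately have "(\<Prod>u\<in>S - {root0}. step_prob w (\<eta> (tparent root0 u)) (\<eta> u)) = 0"
    using v False by (intro prod_zero) auto
  then show ?thesis by (simp add: wform_def)
qed

lemma mu0_cyl: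
  assumes w: "wposi w" and R: "rooted root0 S"
  shows "measure (mu0 w) (cyl S \<eta>) = wform w root0 S \<eta>"
proof (cases "\<forall>v\<in>S. \<eta> v \<in> hnodes")
  case False
  then obtain v where v: "v \<in> S" "\<eta> v \<notin> hnodes" by blast
  then show ?thesis using cyl_is_empty[of v S \<eta>, OF v] wform_zero[of S v \<eta> w, OF R v] by simp
next
  case True
  note allh = True
  have fS: "finite S" and r: "root0 \<in> S" and cl: "\<And>v. v \<in> S - {root0} \<Longrightarrow> par0 v \<in> S"
    using R by (auto simp: rooted_def tparent_root0)
  define \<iota> where "\<iota> v = (Rep_tvert v, if v = root0 then 0 else \<eta> (par0 v))" for v
  define X where "X j = clamp -` {\<eta> (Abs_tvert (fst j))}" for j :: "nat list \<times> nat"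
  have Xi: "X (\<iota> v) = clamp -` {\<eta> v}" for v by (simp add: X_def \<iota>_def Rep_tvert_inverse)
  have inj: "inj_on \<iota> S" by (auto simp: inj_on_def \<iota>_def Rep_tvert_inject)
  have m: "Phi \<in> measurable (PP w) cfg_space" by (rule meas_Phi)
  have "measure (mu0 w) (cyl S \<eta>) = measure (PP w) (Phi -` cyl S \<eta> \<inter> space (PP w))"
    unfolding mu0_def by (rule measure_distr[OF m cyl_sets[OF fS]])
  also have "Phi -` cyl S \<eta> \<inter> space (PP w) = {\<omega>. \<forall>v\<in>S. clamp (\<omega> (\<iota> v)) = \<eta> v}"
  proof (intro set_eqI iffI)
    fix \<omega> assume a: "\<omega> \<in> Phi -` cyl S \<eta> \<inter> space (PP w)"
    then have e: "\<forall>v\<in>S. Phi \<omega> v = \<eta> v" by (auto simp: cyl_def)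
    show "\<omega> \<in> {\<omega>. \<forall>v\<in>S. clamp (\<omega> (\<iota> v)) = \<eta> v}"
    proof (intro CollectI ballI)
      fix v assume v: "v \<in> S"
      show "clamp (\<omega> (\<iota> v)) = \<eta> v"
      proof (cases "v = root0")
        case True then show ?thesis using e v Phi_root[of \<omega>] by (simp add: \<iota>_def)
      next
        case False
        then have "Phi \<omega> v = clamp (\<omega> (Rep_tvert v, Phi \<omega> (par0 v)))" by (rule Phi_rec)
        moreover have "Phi \<omega> (par0 v) = \<eta> (par0 v)" using e cl[of v] v False by auto
        ultimately show ?thesis using e v False by (simp add: \<iota>_def)
      qed
    qed
  next
    fix \<omega> assume a: "\<omega> \<in> {\<omega>. \<forall>v\<in>S. clamp (\<omega> (\<iota> v)) = \<eta> v}"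
    have "Phi \<omega> v = \<eta> v" if "v \<in> S" for v using that
    proof (induction "length (Rep_tvert v)" arbitrary: v rule: less_induct)
      case less
      show ?case
      proof (cases "v = root0")
        case True then show ?thesis using a less by (auto simp: \<iota>_def Phi_root)
      next
        case False
        have "Phi \<omega> (par0 v) = \<eta> (par0 v)"
          using less(1)[of "par0 v"] cl[of v] less(2) False by (auto simp: Rep_par0 ne_root0)
        then show ?thesis using a less(2) False Phi_rec[OF False, of \<omega>] by (auto simp: \<iota>_def)
      qed
    qed
    then show "\<omega> \<in> Phi -` cyl S \<eta> \<inter> space (PP w)"
      using meas_Phi[of w] by (auto simp: cyl_def space_PP measurable_def)
  qed
  also have "{\<omega>. \<forall>v\<in>S. clamp (\<omega> (\<iota> v)) = \<eta> v} = prod_emb UNIV (Mf w) (\<iota> ` S) (PiE (\<iota> ` S) X)"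
  proof -
    have "prod_emb UNIV (Mf w) (\<iota> ` S) (PiE (\<iota> ` S) X) = {\<omega>. \<forall>j\<in>\<iota> ` S. \<omega> j \<in> X j}"
      unfolding prod_emb_def space_PiM Mf_def by (auto simp: PiE_def Pi_def extensional_def simp del: split_paired_All)
    also have "\<dots> = {\<omega>. \<forall>v\<in>S. \<omega> (\<iota> v) \<in> X (\<iota> v)}" by blast
    finally show ?thesis unfolding Xi by simp
  qed
  also have "measure (PP w) \<dots> = enn2real (\<Prod>j\<in>\<iota> ` S. emeasure (Mf w j) (X j))"
    unfolding measure_def PP_def
    by (subst emeasure_PiM_emb) (auto simp: Mf_def prob_space_measure_pmf fS)
  also have "(\<Prod>j\<in>\<iota> ` S. emeasure (Mf w j) (X j)) = (\<Prod>v\<in>S. emeasure (Mf w (\<iota> v)) (clamp -` {\<eta> v}))"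
    by (simp add: prod.reindex[OF inj] Xi)
  also have "\<dots> = (\<Prod>v\<in>S. ennreal (if v = root0 then root_prob w (\<eta> v) else step_prob w (\<eta> (par0 v)) (\<eta> v)))"
  proof (rule prod.cong[OF refl])
    fix v assume v: "v \<in> S"
    show "emeasure (Mf w (\<iota> v)) (clamp -` {\<eta> v}) =
      ennreal (if v = root0 then root_prob w (\<eta> v) else step_prob w (\<eta> (par0 v)) (\<eta> v))"
    proof (cases "v = root0")
      case True then show ?thesis using clamp_pre[of "rp w" "\<eta> v"] rp_ok[OF w] allh v
        by (simp add: Mf_def \<iota>_def)
    next
      case False
      then have pv: "\<eta> (par0 v) \<in> hnodes" using cl[of v] v allh by auto
      have "Rep_tvert v \<noteq> []" using False ne_root0 by auto
      then show ?thesis using clamp_pre[of "sp w (\<eta> (par0 v))" "\<eta> v"] sp_ok[OF w pv] allh v False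
        by (simp add: Mf_def \<iota>_def)
    qed
  qed
  also have "\<dots> = ennreal (\<Prod>v\<in>S. (if v = root0 then root_prob w (\<eta> v) else step_prob w (\<eta> (par0 v)) (\<eta> v)))"
    by (rule prod_ennreal) (auto simp: root_nonneg[OF w] step_nonneg[OF w])
  also have "enn2real \<dots> = (\<Prod>v\<in>S. (if v = root0 then root_prob w (\<eta> v) else step_prob w (\<eta> (par0 v)) (\<eta> v)))"
    by (rule enn2real_ennreal) (auto intro!: prod_nonneg simp: root_nonneg[OF w] step_nonneg[OF w])
  also have "\<dots> = wform w root0 S \<eta>"
    unfolding wform_def prod.remove[OF fS r]
    by (auto intro!: prod.cong simp: tparent_root0)
  finally show ?thesis .
qed

lemma mu0_walk: "wposi w \<Longrightarrow> walk_law w root0 (mu0 w)"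
proof -
  assume w: "wposi w"
  have "prob_space (mu0 w)" unfolding mu0_def by (rule prob_space.prob_space_distr[OF prob_PP meas_Phi])
  moreover have "sets (mu0 w) = sets cfg_space" by (simp add: mu0_def)
  ultimately show ?thesis unfolding walk_law_iff using mu0_cyl[OF w] by blast
qed

lemma tparent_nbr: "tadj u v \<Longrightarrow> tparent u v = u"
  by (rule tparent_char) (auto simp: tadj_sym tcomp_refl)

lemma notin_tcomp: "tadj u v \<Longrightarrow> u \<notin> tcomp u v"
proof
  assume a: "tadj u v" "u \<in> tcomp u v"
  then have "(Rv u)\<^sup>*\<^sup>* v u" by (simp add: tcomp_Rv)
  then show False
  proof (cases rule: rtranclp.cases)
    case rtrancl_refl then show ?thesis using a(1) by simp
  next
    case (rtrancl_into_rtrancl b) then show ?thesis by (simp add: Rv_def)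
  qed
qed

lemma leaf_comp: "c \<in> {0,1,2} \<Longrightarrow> y \<in> tcomp root0 (leaf c) \<Longrightarrow> prefix [c] (Rep_tvert y)"
  using child_comp[of "leaf c" root0 c y] by (simp add: Rep_leaf)

lemma leaf_inj: "c \<in> {0,1,2} \<Longrightarrow> d \<in> {0,1,2} \<Longrightarrow> leaf c = leaf d \<Longrightarrow> c = d"
proof -
  assume a: "c \<in> {0,1,2}" "d \<in> {0,1,2}" "leaf c = leaf d"
  then have "Rep_tvert (leaf c) = Rep_tvert (leaf d)" by simp
  then show ?thesis unfolding Rep_leaf[OF a(1)] Rep_leaf[OF a(2)] by simp
qed

lemma disj_root0: "c \<in> {0,1,2} \<Longrightarrow> d \<in> {0,1,2} \<Longrightarrow> c \<noteq> d \<Longrightarrow> tcomp root0 (leaf c) \<inter> tcomp root0 (leaf d) = {}"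
proof -
  assume a: "c \<in> {0,1,2}" "d \<in> {0,1,2}" "c \<noteq> d"
  have "False" if "y \<in> tcomp root0 (leaf c)" "y \<in> tcomp root0 (leaf d)" for y
  proof -
    have "prefix [c] (Rep_tvert y)" "prefix [d] (Rep_tvert y)"
      using leaf_comp[OF a(1) that(1)] leaf_comp[OF a(2) that(2)] by auto
    then show False using a(3) by (auto simp: prefix_def)
  qed
  then show ?thesis by blast
qed

lemma nbr_pull:
  assumes "tadj u v"
  shows "\<exists>c\<in>{0,1,2}. inv (Lmap u) v = leaf c"
proof -
  have s: "tree_aut (inv (Lmap u))" by (rule aut_inv[OF Lmap_aut])
  have "tadj (inv (Lmap u) u) (inv (Lmap u) v)" using assms aut_tadj[OF s] by simp
  moreover have "inv (Lmap u) u = root0" using aut_inv1[OF Lmap_aut, of u root0] by (simp add: Lmap_root0)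
  ultimately show ?thesis using nbr_root0 by simp
qed

lemma tcomp_pull:
  assumes "tadj u v"
  shows "tcomp u v = Lmap u ` tcomp root0 (inv (Lmap u) v)"
proof -
  have "tcomp (Lmap u root0) (Lmap u (inv (Lmap u) v)) = Lmap u ` tcomp root0 (inv (Lmap u) v)"
    by (rule tcomp_aut[OF Lmap_aut])
  then show ?thesis by (simp add: Lmap_root0 aut_inv2[OF Lmap_aut])
qed

lemma disj_comp:
  assumes "tadj u v1" "tadj u v2" "v1 \<noteq> v2"
  shows "tcomp u v1 \<inter> tcomp u v2 = {}"
proof -
  obtain c where c: "c \<in> {0,1,2}" "inv (Lmap u) v1 = leaf c" using nbr_pull[OF assms(1)] by blast
  obtain d where d: "d \<in> {0,1,2}" "inv (Lmap u) v2 = leaf d" using nbr_pull[OF assms(2)] by blast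
  have "c \<noteq> d"
  proof
    assume "c = d"
    then have "inv (Lmap u) v1 = inv (Lmap u) v2" using c d by simp
    then have "Lmap u (inv (Lmap u) v1) = Lmap u (inv (Lmap u) v2)" by simp
    then show False using assms(3) aut_inv2[OF Lmap_aut] by simp
  qed
  then have "tcomp root0 (leaf c) \<inter> tcomp root0 (leaf d) = {}" using disj_root0 c d by blast
  then show ?thesis unfolding tcomp_pull[OF assms(1)] tcomp_pull[OF assms(2)] c d
    using bij_is_inj[OF aut_bij[OF Lmap_aut, of u]] by (simp add: image_Int[symmetric])
qed

definition pth :: "tvert \<Rightarrow> tvert set" where
  "pth y = (\<lambda>k. Abs_tvert (take k (Rep_tvert y))) ` {1..length (Rep_tvert y)}"

lemma Rep_take: "Rep_tvert (Abs_tvert (take k (Rep_tvert y))) = take k (Rep_tvert y)"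
  by (rule Abs_inv) (rule valid_take[OF valid_Rep])

lemma pth_root0:
  assumes c: "c \<in> {0,1,2}" and y: "y \<in> tcomp root0 (leaf c)"
  shows "finite (pth y) \<and> pth y \<subseteq> tcomp root0 (leaf c) \<and> y \<in> pth y \<and>
         (\<forall>s\<in>pth y. tparent root0 s \<in> insert root0 (pth y))"
proof (intro conjI)
  have pre: "prefix [c] (Rep_tvert y)" by (rule leaf_comp[OF c y])
  then have ne: "Rep_tvert y \<noteq> []" by (auto simp: prefix_def)
  show "finite (pth y)" by (simp add: pth_def)
  show "y \<in> pth y" unfolding pth_def using ne
    by (auto intro!: image_eqI[of _ _ "length (Rep_tvert y)"] simp: Rep_tvert_inverse Suc_le_eq)
  have "Abs_tvert (take k (Rep_tvert y)) \<in> tcomp root0 (leaf c)" if "1 \<le> k" "k \<le> length (Rep_tvert y)" for k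
    using that
  proof (induction k)
    case 0 then show ?case by simp
  next
    case (Suc k)
    show ?case
    proof (cases "k = 0")
      case True
      have "take 1 (Rep_tvert y) = [c]" using pre by (auto simp: prefix_def)
      then have "Abs_tvert (take 1 (Rep_tvert y)) = leaf c" by (simp add: leaf_def)
      then show ?thesis using True tcomp_refl by simp
    next
      case False
      let ?a = "Abs_tvert (take k (Rep_tvert y))" let ?b = "Abs_tvert (take (Suc k) (Rep_tvert y))"
      have IH: "?a \<in> tcomp root0 (leaf c)" using Suc False by simp
      have "Rep_tvert ?b = Rep_tvert ?a @ [Rep_tvert y ! k]"
        unfolding Rep_take using Suc(3) by (simp add: take_Suc_conv_app_nth)
      then have "tadj ?a ?b" by (simp add: tadj_def)
      moreover have "?a \<noteq> root0" "?b \<noteq> root0" using False Suc(3) ne by (auto simp: ne_root0 Rep_take)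
      ultimately show ?thesis using tcomp_step[OF IH] by blast
    qed
  qed
  then show "pth y \<subseteq> tcomp root0 (leaf c)" by (auto simp: pth_def)
  show "\<forall>s\<in>pth y. tparent root0 s \<in> insert root0 (pth y)"
  proof
    fix s assume "s \<in> pth y"
    then obtain k where k: "1 \<le> k" "k \<le> length (Rep_tvert y)" "s = Abs_tvert (take k (Rep_tvert y))"
      by (auto simp: pth_def)
    have sne: "s \<noteq> root0" using k ne by (auto simp: ne_root0 Rep_take)
    have "Rep_tvert (tparent root0 s) = butlast (Rep_tvert s)" by (simp add: tparent_root0[OF sne] Rep_par0)
    also have "Rep_tvert s = take k (Rep_tvert y)" using k(3) Rep_take by simp
    also have "butlast (take k (Rep_tvert y)) = take (k - 1) (Rep_tvert y)" using k(2) by (simp add: butlast_take)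
    finally have "Rep_tvert (tparent root0 s) = take (k - 1) (Rep_tvert y)" .
    then have "tparent root0 s = Abs_tvert (take (k - 1) (Rep_tvert y))"
      using Rep_tvert_inverse[of "tparent root0 s"] by simp
    then show "tparent root0 s \<in> insert root0 (pth y)"
    proof (cases "k = 1")
      case True then show ?thesis using \<open>tparent root0 s = _\<close> by (simp add: root0_def)
    next
      case False
      then have "k - 1 \<in> {1..length (Rep_tvert y)}" using k by auto
      then show ?thesis using \<open>tparent root0 s = _\<close> unfolding pth_def by blast
    qed
  qed
qed

lemma path_set:
  assumes a: "tadj u v" and y: "y \<in> tcomp u v"
  shows "\<exists>S. finite S \<and> S \<subseteq> tcomp u v \<and> y \<in> S \<and> (\<forall>s\<in>S. tparent u s \<in> insert u S)"
proof -
  let ?s = "Lmap u"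
  have s: "tree_aut ?s" by (rule Lmap_aut)
  obtain c where c: "c \<in> {0,1,2}" "inv ?s v = leaf c" using nbr_pull[OF a] by blast
  have T: "tcomp u v = ?s ` tcomp root0 (leaf c)" using tcomp_pull[OF a] c by simp
  obtain y0 where y0: "y0 \<in> tcomp root0 (leaf c)" "y = ?s y0" using y T by auto
  note P = pth_root0[OF c(1) y0(1)]
  show ?thesis
  proof (intro exI conjI)
    show "finite (?s ` pth y0)" using P by simp
    show "?s ` pth y0 \<subseteq> tcomp u v" using P T by auto
    show "y \<in> ?s ` pth y0" using P y0 by simp
    show "\<forall>x\<in>?s ` pth y0. tparent u x \<in> insert u (?s ` pth y0)"
    proof
      fix x assume "x \<in> ?s ` pth y0"
      then obtain s0 where s0: "s0 \<in> pth y0" "x = ?s s0" by blast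
      have "s0 \<noteq> root0" using s0(1) P notin_tcomp[OF tadj_root0_leaf[OF c(1)]] by blast
      then have "tparent (?s root0) (?s s0) = ?s (tparent root0 s0)" by (rule tparent_aut[OF s])
      then have "tparent u x = ?s (tparent root0 s0)" using s0 by (simp add: Lmap_root0)
      moreover have "tparent root0 s0 \<in> insert root0 (pth y0)" using P s0 by blast
      ultimately show "tparent u x \<in> insert u (?s ` pth y0)" by (auto simp: Lmap_root0)
    qed
  qed
qed

lemma one_hn: "(1::nat) \<in> hnodes" by (simp add: hnodes_def)

definition Gc :: "tvert \<Rightarrow> tvert \<Rightarrow> (tvert \<Rightarrow> nat) set set" where
  "Gc u v = {cyl S \<eta> | S \<eta>. finite S \<and> S \<subseteq> tcomp u v \<and> (\<forall>s\<in>S. tparent u s \<in> insert u S)}"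

lemma Gc_Pow: "Gc u v \<subseteq> Pow (space cfg_space)" by (auto simp: Gc_def cyl_def)

lemma Int_stable_Gc: "tadj u v \<Longrightarrow> Int_stable (Gc u v)"
proof (rule Int_stableI)
  assume a: "tadj u v"
  fix A B assume "A \<in> Gc u v" "B \<in> Gc u v"
  then obtain S1 S2 \<eta>1 \<eta>2 where A: "A = cyl S1 \<eta>1" "finite S1" "S1 \<subseteq> tcomp u v" "\<forall>s\<in>S1. tparent u s \<in> insert u S1"
    and B: "B = cyl S2 \<eta>2" "finite S2" "S2 \<subseteq> tcomp u v" "\<forall>s\<in>S2. tparent u s \<in> insert u S2"
    unfolding Gc_def by blast
  show "A \<inter> B \<in> Gc u v"
  proof (cases "\<forall>v\<in>S1 \<inter> S2. \<eta>1 v = \<eta>2 v")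
    case True
    then have "A \<inter> B = cyl (S1 \<union> S2) (\<lambda>v. if v \<in> S1 then \<eta>1 v else \<eta>2 v)" using A B cyl_Int by simp
    moreover have "finite (S1 \<union> S2)" "S1 \<union> S2 \<subseteq> tcomp u v" "\<forall>s\<in>S1 \<union> S2. tparent u s \<in> insert u (S1 \<union> S2)"
      using A B by auto
    ultimately show ?thesis unfolding Gc_def by (intro CollectI exI conjI) (assumption | rule refl)+
  next
    case False
    have "A \<inter> B = {}" unfolding A(1) B(1) cyl_Int using False by (rule if_not_P)
    also have "{} = cyl {v} (\<lambda>_. 0)" by (rule cyl_is_empty[symmetric]) (auto simp: hnodes_def)
    finally have "A \<inter> B = cyl {v} (\<lambda>_. 0)" .
    moreover have "finite {v}" "{v} \<subseteq> tcomp u v" "\<forall>s\<in>{v}. tparent u s \<in> insert u {v}"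
      using tcomp_refl[of v u] tparent_nbr[OF a] by auto
    ultimately show ?thesis unfolding Gc_def by (intro CollectI exI conjI) (assumption | rule refl)+
  qed
qed

lemma comp_events_sub:
  assumes a: "tadj u v"
  shows "comp_events (tcomp u v) \<subseteq> sigma_sets (space cfg_space) (Gc u v)"
proof
  fix A assume A: "A \<in> comp_events (tcomp u v)"
  let ?C = "tcomp u v"
  let ?M = "sigma (space cfg_space) (Gc u v)"
  let ?p = "\<lambda>\<phi>. merge_cfg ?C \<phi> (\<lambda>_. 1)"
  have sM: "sets ?M = sigma_sets (space cfg_space) (Gc u v)" "space ?M = space cfg_space"
    using Gc_Pow by (simp_all add: sets_measure_of space_measure_of)
  have coord: "(\<lambda>\<phi>. \<phi> x) \<in> measurable ?M (count_space hnodes)" if x: "x \<in> ?C" for x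
  proof (subst measurable_count_space_eq2[OF hnodes_finite], intro conjI ballI)
    show "(\<lambda>\<phi>. \<phi> x) \<in> space ?M \<rightarrow> hnodes" using sM by (auto simp: space_cfg)
    fix j assume j: "j \<in> hnodes"
    obtain S where S: "finite S" "S \<subseteq> ?C" "x \<in> S" "\<forall>s\<in>S. tparent u s \<in> insert u S"
      using path_set[OF a x] by blast
    let ?X = "{\<eta> \<in> PiE S (\<lambda>_. hnodes). \<eta> x = j}"
    have "(\<lambda>\<phi>. \<phi> x) -` {j} \<inter> space ?M = {\<phi> \<in> space cfg_space. restrict \<phi> S \<in> ?X}"
      unfolding sM(2) using S(3) by (auto simp: space_cfg)
    also have "\<dots> = (\<Union>\<eta>\<in>?X. cyl S \<eta>)" by (rule cyl_decomp) (auto simp: S)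
    also have "\<dots> \<in> sigma_sets (space cfg_space) (Gc u v)"
    proof (rule sigma_fin_UN[OF _ Gc_Pow])
      show "finite ?X" by (rule finite_subset[of _ "PiE S (\<lambda>_. hnodes)"]) (auto intro: finite_PiE S)
      fix \<eta> show "cyl S \<eta> \<in> sigma_sets (space cfg_space) (Gc u v)"
        by (rule sigma_sets.Basic) (use S in \<open>auto simp: Gc_def\<close>)
    qed
    finally show "(\<lambda>\<phi>. \<phi> x) -` {j} \<inter> space ?M \<in> sets ?M" using sM by simp
  qed
  have mp: "?p \<in> measurable ?M cfg_space"
  proof -
    have "(\<lambda>\<phi> x. ?p \<phi> x) \<in> measurable ?M (Pi\<^sub>M UNIV (\<lambda>_. count_space hnodes))"
    proof (rule measurable_PiM_single')
      fix x :: tvert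
      show "(\<lambda>\<phi>. ?p \<phi> x) \<in> measurable ?M (count_space hnodes)"
      proof (cases "x \<in> ?C")
        case True then show ?thesis using coord[OF True] by (simp add: merge_cfg_def)
      next
        case False then show ?thesis using one_hn by (simp add: merge_cfg_def)
      qed
    next
      show "(\<lambda>\<phi> x. ?p \<phi> x) \<in> space ?M \<rightarrow> (\<Pi>\<^sub>E i\<in>UNIV. space (count_space hnodes))"
      proof
        fix \<phi> assume "\<phi> \<in> space ?M"
        then have "\<forall>v. \<phi> v \<in> hnodes" using sM by (simp add: space_cfg)
        then show "(\<lambda>x. ?p \<phi> x) \<in> (\<Pi>\<^sub>E i\<in>UNIV. space (count_space hnodes))"
          using one_hn by (auto simp: merge_cfg_def PiE_def)
      qed
    qed
    then show ?thesis by (simp add: cfg_space_def)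
  qed
  have As: "A \<in> sets cfg_space" using A by (simp add: comp_events_def)
  have Ai: "\<And>\<phi> \<psi>. \<phi> \<in> space cfg_space \<Longrightarrow> \<psi> \<in> space cfg_space \<Longrightarrow> (\<forall>v\<in>?C. \<phi> v = \<psi> v) \<Longrightarrow> (\<phi> \<in> A \<longleftrightarrow> \<psi> \<in> A)"
    using A unfolding comp_events_def by blast
  have agree: "\<forall>x\<in>?C. \<phi> x = ?p \<phi> x" for \<phi> by (simp add: merge_cfg_def)
  have "?p -` A \<inter> space ?M \<in> sets ?M" by (rule measurable_sets[OF mp As])
  moreover have "?p -` A \<inter> space ?M = A"
  proof (intro set_eqI iffI)
    fix \<phi> assume h: "\<phi> \<in> ?p -` A \<inter> space ?M"
    then have "\<phi> \<in> space cfg_space" "?p \<phi> \<in> A" using sM by auto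
    moreover have "?p \<phi> \<in> space cfg_space" using \<open>\<phi> \<in> space cfg_space\<close> one_hn by (auto simp: space_cfg merge_cfg_def)
    ultimately show "\<phi> \<in> A" using Ai agree by blast
  next
    fix \<phi> assume h: "\<phi> \<in> A"
    then have s: "\<phi> \<in> space cfg_space" using sets.sets_into_space[OF As] by auto
    then have "?p \<phi> \<in> space cfg_space" using one_hn by (auto simp: space_cfg merge_cfg_def)
    then have "?p \<phi> \<in> A" using Ai[OF s] agree h by blast
    then show "\<phi> \<in> ?p -` A \<inter> space ?M" using s sM by simp
  qed
  ultimately show "A \<in> sigma_sets (space cfg_space) (Gc u v)" using sM by simp
qed

lemma rooted_single: "rooted u {u}" by (simp add: rooted_def)

lemma indep_Gc:
  assumes Wu: "walk_law w u \<mu>" and w: "wposi w" and pos: "root_prob w i > 0"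
  shows "prob_space.indep_sets (uniform_measure \<mu> (cyl {u} (\<lambda>_. i))) (Gc u) {v. tadj u v}"
proof -
  let ?B = "cyl {u} (\<lambda>_. i)"
  have P: "prob_space \<mu>" and Se: "sets \<mu> = sets cfg_space"
    and F: "\<And>S \<eta>. rooted u S \<Longrightarrow> measure \<mu> (cyl S \<eta>) = wform w u S \<eta>"
    using Wu by (auto simp: walk_law_iff)
  interpret M: prob_space \<mu> by (rule P)
  have mB: "measure \<mu> ?B = root_prob w i" using F[OF rooted_single] by (simp add: wform_def)
  have Bs: "?B \<in> sets \<mu>" using Se cyl_sets by simp
  have eB: "emeasure \<mu> ?B = ennreal (root_prob w i)" using mB by (simp add: M.emeasure_eq_measure)
  have e1: "emeasure \<mu> ?B \<noteq> 0" "emeasure \<mu> ?B \<noteq> \<infinity>" using eB pos by auto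
  interpret Q: prob_space "uniform_measure \<mu> ?B" by (rule prob_space_uniform_measure[OF e1])
  have pQ: "Q.prob X = measure \<mu> (?B \<inter> X) / root_prob w i" if "X \<in> sets \<mu>" for X
    using measure_uniform_measure[OF e1 that] mB by simp
  show ?thesis unfolding Q.indep_sets_def
  proof (intro conjI ballI allI impI)
    fix v assume "v \<in> {v. tadj u v}"
    show "Gc u v \<subseteq> Q.events" using Se cyl_sets by (auto simp: Gc_def)
  next
    fix J A assume J: "J \<subseteq> {v. tadj u v}" "J \<noteq> {}" "finite J" and A: "A \<in> Pi J (Gc u)"
    have "\<forall>j\<in>J. \<exists>p. A j = cyl (fst p) (snd p) \<and> finite (fst p) \<and> fst p \<subseteq> tcomp u j \<and>
       (\<forall>s\<in>fst p. tparent u s \<in> insert u (fst p))"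
      using A unfolding Gc_def Pi_def by force
    then obtain f where f: "\<forall>j\<in>J. A j = cyl (fst (f j)) (snd (f j)) \<and> finite (fst (f j)) \<and> fst (f j) \<subseteq> tcomp u j \<and>
       (\<forall>s\<in>fst (f j). tparent u s \<in> insert u (fst (f j)))" by (metis bchoice)
    define S where "S j = fst (f j)" for j
    define \<eta> where "\<eta> j = snd (f j)" for j
    have A': "\<And>j. j \<in> J \<Longrightarrow> A j = cyl (S j) (\<eta> j)" and fS: "\<And>j. j \<in> J \<Longrightarrow> finite (S j)"
      and Sc: "\<And>j. j \<in> J \<Longrightarrow> S j \<subseteq> tcomp u j"
      and cl: "\<And>j s. j \<in> J \<Longrightarrow> s \<in> S j \<Longrightarrow> tparent u s \<in> insert u (S j)"
      using f by (auto simp: S_def \<eta>_def)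
    have disj: "\<And>j1 j2. j1 \<in> J \<Longrightarrow> j2 \<in> J \<Longrightarrow> j1 \<noteq> j2 \<Longrightarrow> S j1 \<inter> S j2 = {}"
      using disj_comp Sc J(1) by blast
    have nu: "\<And>j. j \<in> J \<Longrightarrow> u \<notin> S j" using notin_tcomp Sc J(1) by blast
    define T where "T = insert u (\<Union>j\<in>J. S j)"
    define \<zeta> where "\<zeta> v = (if v = u then i else \<eta> (SOME j. j \<in> J \<and> v \<in> S j) v)" for v
    define \<zeta>j where "\<zeta>j j = (\<eta> j)(u := i)" for j
    have \<zeta>S: "\<zeta> v = \<eta> j v" if "j \<in> J" "v \<in> S j" for j v
    proof -
      have "v \<noteq> u" using nu that by blast
      moreover have "(SOME j. j \<in> J \<and> v \<in> S j) = j"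
      proof (rule some_equality)
        show "j \<in> J \<and> v \<in> S j" using that by simp
        fix j' assume "j' \<in> J \<and> v \<in> S j'"
        then show "j' = j" using disj that by blast
      qed
      ultimately show ?thesis by (simp add: \<zeta>_def)
    qed
    have cylJ: "?B \<inter> (\<Inter>j\<in>J. A j) = cyl T \<zeta>"
    proof (intro set_eqI iffI)
      fix \<phi> assume h: "\<phi> \<in> ?B \<inter> (\<Inter>j\<in>J. A j)"
      show "\<phi> \<in> cyl T \<zeta>" unfolding cyl_def T_def
      proof (intro CollectI conjI ballI)
        show "\<phi> \<in> space cfg_space" using h by (simp add: cyl_def)
        fix v assume "v \<in> insert u (\<Union>j\<in>J. S j)"
        then show "\<phi> v = \<zeta> v"
        proof
          assume "v = u" then show ?thesis using h by (simp add: cyl_def \<zeta>_def)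
        next
          assume "v \<in> (\<Union>j\<in>J. S j)"
          then obtain j where j: "j \<in> J" "v \<in> S j" by blast
          then have "\<phi> \<in> cyl (S j) (\<eta> j)" using h A' by blast
          then show ?thesis using j \<zeta>S by (simp add: cyl_def)
        qed
      qed
    next
      fix \<phi> assume h: "\<phi> \<in> cyl T \<zeta>"
      then have sp: "\<phi> \<in> space cfg_space" and e: "\<forall>v\<in>T. \<phi> v = \<zeta> v" by (auto simp: cyl_def)
      have "\<phi> \<in> ?B" using sp e by (simp add: cyl_def T_def \<zeta>_def)
      moreover have "\<phi> \<in> A j" if j: "j \<in> J" for j
        unfolding A'[OF j] cyl_def using sp e \<zeta>S j by (auto simp: T_def)
      ultimately show "\<phi> \<in> ?B \<inter> (\<Inter>j\<in>J. A j)" by blast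
    qed
    have cylj: "?B \<inter> A j = cyl (insert u (S j)) (\<zeta>j j)" if j: "j \<in> J" for j
      unfolding A'[OF j] using nu[OF j] by (auto simp: cyl_def \<zeta>j_def)
    have RT: "rooted u T" unfolding rooted_def T_def using fS J(3) cl by blast
    have Rj: "rooted u (insert u (S j))" if j: "j \<in> J" for j unfolding rooted_def using fS[OF j] cl[OF j] by blast
    define g where "g j = (\<Prod>v\<in>S j. step_prob w (\<zeta>j j (tparent u v)) (\<eta> j v))" for j
    have wT: "wform w u T \<zeta> = root_prob w i * (\<Prod>j\<in>J. g j)"
    proof -
      have TT: "T - {u} = (\<Union>j\<in>J. S j)" using nu by (auto simp: T_def)
      have "(\<Prod>v\<in>T - {u}. step_prob w (\<zeta> (tparent u v)) (\<zeta> v)) =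
            (\<Prod>j\<in>J. \<Prod>v\<in>S j. step_prob w (\<zeta> (tparent u v)) (\<zeta> v))"
        unfolding TT by (rule prod.UNION_disjoint) (use J(3) fS disj in auto)
      also have "\<dots> = (\<Prod>j\<in>J. g j)"
      proof (rule prod.cong[OF refl])
        fix j assume j: "j \<in> J"
        show "(\<Prod>v\<in>S j. step_prob w (\<zeta> (tparent u v)) (\<zeta> v)) = g j" unfolding g_def
        proof (rule prod.cong[OF refl])
          fix v assume v: "v \<in> S j"
          have "\<zeta> (tparent u v) = \<zeta>j j (tparent u v)"
          proof (cases "tparent u v = u")
            case True then show ?thesis by (simp add: \<zeta>_def \<zeta>j_def)
          next
            case False
            then have "tparent u v \<in> S j" using cl[OF j v] by simp
            then show ?thesis using False \<zeta>S[OF j] by (simp add: \<zeta>j_def)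
          qed
          then show "step_prob w (\<zeta> (tparent u v)) (\<zeta> v) = step_prob w (\<zeta>j j (tparent u v)) (\<eta> j v)"
            using \<zeta>S[OF j v] by simp
        qed
      qed
      finally show ?thesis unfolding wform_def by (simp add: \<zeta>_def)
    qed
    have wj: "wform w u (insert u (S j)) (\<zeta>j j) = root_prob w i * g j" if j: "j \<in> J" for j
    proof -
      have "insert u (S j) - {u} = S j" using nu[OF j] by auto
      moreover have "(\<Prod>v\<in>S j. step_prob w (\<zeta>j j (tparent u v)) (\<zeta>j j v)) = g j"
        unfolding g_def using nu[OF j] by (intro prod.cong) (auto simp: \<zeta>j_def)
      ultimately show ?thesis unfolding wform_def by (simp add: \<zeta>j_def)
    qed
    have Ase: "\<And>j. j \<in> J \<Longrightarrow> A j \<in> sets \<mu>" using A' Se cyl_sets fS by simp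
    have IAs: "(\<Inter>j\<in>J. A j) \<in> sets \<mu>" using Ase J(2,3) by (intro sets.finite_INT) auto
    have "Q.prob (\<Inter>j\<in>J. A j) = root_prob w i * (\<Prod>j\<in>J. g j) / root_prob w i"
      using pQ[OF IAs] cylJ F[OF RT] wT by simp
    also have "\<dots> = (\<Prod>j\<in>J. g j)" using pos by simp
    also have "\<dots> = (\<Prod>j\<in>J. Q.prob (A j))"
    proof (rule prod.cong[OF refl])
      fix j assume j: "j \<in> J"
      have "Q.prob (A j) = root_prob w i * g j / root_prob w i"
        using pQ[OF Ase[OF j]] cylj[OF j] F[OF Rj[OF j]] wj[OF j] by simp
      then show "g j = Q.prob (A j)" using pos by simp
    qed
    finally show "Q.prob (\<Inter>j\<in>J. A j) = (\<Prod>j\<in>J. Q.prob (A j))" .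
  qed
qed

lemma simple_part:
  assumes W: "walk_law w root0 \<mu>" and w: "wposi w" and pos: "measure \<mu> {\<phi> \<in> space \<mu>. \<phi> u = i} > 0"
  shows "prob_space.indep_sets (uniform_measure \<mu> {\<phi> \<in> space \<mu>. \<phi> u = i})
            (\<lambda>v. comp_events (tcomp u v)) {v. tadj u v}"
proof -
  have Wu: "walk_law w u \<mu>" by (rule all_roots[OF W w])
  have Se: "sets \<mu> = sets cfg_space" using W by (simp add: walk_law_def)
  have sp: "space \<mu> = space cfg_space" using Se by (rule sets_eq_imp_space_eq)
  have Beq: "{\<phi> \<in> space \<mu>. \<phi> u = i} = cyl {u} (\<lambda>_. i)" by (simp add: cyl_def sp)
  have mB: "measure \<mu> (cyl {u} (\<lambda>_. i)) = root_prob w i"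
    using Wu rooted_single by (simp add: walk_law_iff wform_def)
  have rpos: "root_prob w i > 0" using pos Beq mB by simp
  have P: "prob_space \<mu>" using W by (simp add: walk_law_def)
  interpret M: prob_space \<mu> by (rule P)
  have e1: "emeasure \<mu> (cyl {u} (\<lambda>_. i)) \<noteq> 0" "emeasure \<mu> (cyl {u} (\<lambda>_. i)) \<noteq> \<infinity>"
    using mB rpos by (auto simp: M.emeasure_eq_measure)
  interpret Q: prob_space "uniform_measure \<mu> (cyl {u} (\<lambda>_. i))" by (rule prob_space_uniform_measure[OF e1])
  have I: "Q.indep_sets (Gc u) {v. tadj u v}" by (rule indep_Gc[OF Wu w rpos])
  have "Q.indep_sets (\<lambda>v. sigma_sets (space (uniform_measure \<mu> (cyl {u} (\<lambda>_. i)))) (Gc u v)) {v. tadj u v}"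
    by (rule Q.indep_sets_sigma[OF I]) (simp add: Int_stable_Gc)
  then have "Q.indep_sets (\<lambda>v. comp_events (tcomp u v)) {v. tadj u v}"
    by (rule Q.indep_sets_mono_sets) (use comp_events_sub sp in auto)
  then show ?thesis unfolding Beq .
qed

definition bd :: "tvert set \<Rightarrow> tvert set" where "bd U = {b. b \<notin> U \<and> (\<exists>a\<in>U. tadj a b)}"

definition Rdl :: "tvert set \<Rightarrow> nat" where
  "Rdl U = Suc (Max (insert 0 ((\<lambda>v. length (Rep_tvert v)) ` U)))"

lemma Rdl_lt: "finite U \<Longrightarrow> v \<in> U \<Longrightarrow> length (Rep_tvert v) < Rdl U"
  unfolding Rdl_def by (simp add: le_imp_less_Suc)

lemma tadj_length: "tadj a b \<Longrightarrow> length (Rep_tvert b) \<le> Suc (length (Rep_tvert a))"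
  unfolding tadj_def by auto

lemma bd_ball: "finite U \<Longrightarrow> bd U \<subseteq> ball (Rdl U)"
  unfolding bd_def ball_def using Rdl_lt tadj_length by (fastforce simp: Suc_le_eq)

lemma U_ball: "finite U \<Longrightarrow> U \<subseteq> ball R \<Longrightarrow> True" by simp

lemma sw_dep:
  assumes "\<forall>v\<in>bd U. \<omega> v = \<omega>' v"
  shows "spec_weight lam U \<omega> \<eta> = spec_weight lam U \<omega>' \<eta>"
proof -
  have "(\<forall>a b. a \<in> U \<and> tadj a b \<longrightarrow> hadj (merge_cfg U \<eta> \<omega> a) (merge_cfg U \<eta> \<omega> b)) \<longleftrightarrow>
        (\<forall>a b. a \<in> U \<and> tadj a b \<longrightarrow> hadj (merge_cfg U \<eta> \<omega>' a) (merge_cfg U \<eta> \<omega>' b))"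
  proof -
    have "merge_cfg U \<eta> \<omega> b = merge_cfg U \<eta> \<omega>' b" if "a \<in> U" "tadj a b" for a b
      using assms that by (auto simp: merge_cfg_def bd_def)
    moreover have "merge_cfg U \<eta> \<omega> a = merge_cfg U \<eta> \<omega>' a" if "a \<in> U" for a
      using that by (simp add: merge_cfg_def)
    ultimately show ?thesis by metis
  qed
  then show ?thesis unfolding spec_weight_def by simp
qed

lemma sZ_dep: "\<forall>v\<in>bd U. \<omega> v = \<omega>' v \<Longrightarrow> spec_Z lam U \<omega> = spec_Z lam U \<omega>'"
  unfolding spec_Z_def using sw_dep by (metis (no_types, lifting) sum.cong)

lemma restrict_meas:
  assumes D: "finite D"
  shows "(\<lambda>\<omega>. restrict \<omega> D) \<in> measurable cfg_space (count_space (PiE D (\<lambda>_. hnodes)))"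
proof (subst measurable_count_space_eq2, intro finite_PiE D hnodes_finite, intro conjI ballI)
  show "(\<lambda>\<omega>. restrict \<omega> D) \<in> space cfg_space \<rightarrow> PiE D (\<lambda>_. hnodes)" by (auto simp: space_cfg)
  fix \<xi> assume \<xi>: "\<xi> \<in> PiE D (\<lambda>_. hnodes)"
  have "(\<lambda>\<omega>. restrict \<omega> D) -` {\<xi>} \<inter> space cfg_space = cyl D \<xi>"
    using \<xi> by (auto simp: cyl_def PiE_def extensional_def fun_eq_iff)
  then show "(\<lambda>\<omega>. restrict \<omega> D) -` {\<xi>} \<inter> space cfg_space \<in> sets cfg_space" using cyl_sets D by simp
qed

lemma fin_dep_meas:
  fixes f :: "(tvert \<Rightarrow> nat) \<Rightarrow> real"
  assumes D: "finite D" and dep: "\<And>\<omega> \<omega>'. \<omega> \<in> space cfg_space \<Longrightarrow> \<omega>' \<in> space cfg_space \<Longrightarrow> (\<forall>v\<in>D. \<omega> v = \<omega>' v) \<Longrightarrow> f \<omega> = f \<omega>'"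
  shows "f \<in> borel_measurable cfg_space"
proof -
  define h where "h \<xi> = f (merge_cfg D \<xi> (\<lambda>_. 1))" for \<xi>
  have "(\<lambda>\<omega>. h (restrict \<omega> D)) \<in> borel_measurable cfg_space"
    by (rule measurable_compose[OF restrict_meas[OF D]]) simp
  moreover have "h (restrict \<omega> D) = f \<omega>" if \<omega>: "\<omega> \<in> space cfg_space" for \<omega>
  proof -
    have "merge_cfg D (restrict \<omega> D) (\<lambda>_. 1) \<in> space cfg_space" using \<omega> one_hn by (auto simp: space_cfg merge_cfg_def)
    then show ?thesis unfolding h_def by (rule dep) (use \<omega> in \<open>auto simp: merge_cfg_def\<close>)
  qed
  ultimately show ?thesis using measurable_cong by (metis (no_types, lifting))
qed

lemma merge_meas:
  assumes \<eta>: "\<eta> \<in> PiE U (\<lambda>_. hnodes)"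
  shows "(\<lambda>\<omega>. merge_cfg U \<eta> \<omega>) \<in> measurable cfg_space cfg_space"
proof -
  have "(\<lambda>\<omega> v. merge_cfg U \<eta> \<omega> v) \<in> measurable cfg_space (Pi\<^sub>M UNIV (\<lambda>_. count_space hnodes))"
  proof (rule measurable_PiM_single')
    fix v :: tvert
    show "(\<lambda>\<omega>. merge_cfg U \<eta> \<omega> v) \<in> measurable cfg_space (count_space hnodes)"
    proof (cases "v \<in> U")
      case True then show ?thesis using \<eta> by (simp add: merge_cfg_def PiE_def Pi_def)
    next
      case False then show ?thesis by (simp add: merge_cfg_def meas_coord)
    qed
  next
    show "(\<lambda>\<omega> v. merge_cfg U \<eta> \<omega> v) \<in> space cfg_space \<rightarrow> (\<Pi>\<^sub>E i\<in>UNIV. space (count_space hnodes))"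
      using \<eta> by (auto simp: space_cfg merge_cfg_def PiE_def Pi_def)
  qed
  then show ?thesis by (simp add: cfg_space_def)
qed

lemma merge_space: "\<eta> \<in> PiE U (\<lambda>_. hnodes) \<Longrightarrow> \<omega> \<in> space cfg_space \<Longrightarrow> merge_cfg U \<eta> \<omega> \<in> space cfg_space"
  by (auto simp: space_cfg merge_cfg_def PiE_def Pi_def)

definition nch :: "tvert set \<Rightarrow> tvert \<Rightarrow> nat" where
  "nch T v = card {s \<in> T - {root0}. par0 s = v}"

definition aF :: "(nat \<Rightarrow> real) \<Rightarrow> tvert set \<Rightarrow> tvert \<Rightarrow> nat \<Rightarrow> real" where
  "aF w T v j = w j * (if v = root0 then hz w j else 1) / hz w j ^ nch T v"

lemma hz_nz: "wposi w \<Longrightarrow> j \<in> hnodes \<Longrightarrow> hz w j \<noteq> 0" using hz_pos by fastforce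

lemma par0_in_ball: "v \<in> ball R - {root0} \<Longrightarrow> par0 v \<in> ball R"
  by (auto simp: ball_def Rep_par0)

lemma F1:
  assumes w: "wposi w" and hn: "\<forall>v\<in>ball R. \<zeta> v \<in> hnodes"
  shows "wform w root0 (ball R) \<zeta> =
     (if \<forall>v\<in>ball R - {root0}. hadj (\<zeta> (par0 v)) (\<zeta> v) then 1 else 0) * (\<Prod>v\<in>ball R. aF w (ball R) v (\<zeta> v)) / Kc w"
proof -
  let ?T = "ball R"
  have fT: "finite ?T" by (rule finite_ball)
  have r: "root0 \<in> ?T" by (rule root0_ball)
  have tp: "\<And>v. v \<in> ?T - {root0} \<Longrightarrow> tparent root0 v = par0 v" by (simp add: tparent_root0)
  show ?thesis
  proof (cases "\<forall>v\<in>?T - {root0}. hadj (\<zeta> (par0 v)) (\<zeta> v)")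
    case False
    then obtain v where v: "v \<in> ?T - {root0}" "\<not> hadj (\<zeta> (par0 v)) (\<zeta> v)" by blast
    have z: "step_prob w (\<zeta> (tparent root0 v)) (\<zeta> v) = 0" using v(2) tp[OF v(1)] by (simp add: step_prob_def)
    have "(\<Prod>v\<in>?T - {root0}. step_prob w (\<zeta> (tparent root0 v)) (\<zeta> v)) = 0"
      by (rule prod_zero) (use v(1) z fT in blast)+
    then show ?thesis unfolding wform_def if_not_P[OF False] by simp
  next
    case True
    have hzp: "\<And>v. v \<in> ?T \<Longrightarrow> hz w (\<zeta> v) \<noteq> 0" using hz_nz[OF w] hn by blast
    have "(\<Prod>v\<in>?T - {root0}. step_prob w (\<zeta> (tparent root0 v)) (\<zeta> v)) =
          (\<Prod>v\<in>?T - {root0}. w (\<zeta> v) / hz w (\<zeta> (par0 v)))"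
      using True tp by (intro prod.cong) (auto simp: step_prob_def)
    also have "\<dots> = (\<Prod>v\<in>?T - {root0}. w (\<zeta> v)) / (\<Prod>v\<in>?T - {root0}. hz w (\<zeta> (par0 v)))"
      by (rule prod_dividef)
    also have "(\<Prod>v\<in>?T - {root0}. hz w (\<zeta> (par0 v))) = (\<Prod>u\<in>?T. hz w (\<zeta> u) ^ nch ?T u)"
    proof -
      have "(\<Prod>u\<in>?T. \<Prod>v\<in>{x. x \<in> ?T - {root0} \<and> par0 x = u}. hz w (\<zeta> (par0 v))) =
            (\<Prod>v\<in>?T - {root0}. hz w (\<zeta> (par0 v)))"
        by (rule prod.group) (use fT par0_in_ball in auto)
      moreover have "(\<Prod>v\<in>{x. x \<in> ?T - {root0} \<and> par0 x = u}. hz w (\<zeta> (par0 v))) = hz w (\<zeta> u) ^ nch ?T u" for u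
      proof -
        have "(\<Prod>v\<in>{x. x \<in> ?T - {root0} \<and> par0 x = u}. hz w (\<zeta> (par0 v))) =
              (\<Prod>v\<in>{x. x \<in> ?T - {root0} \<and> par0 x = u}. hz w (\<zeta> u))" by (rule prod.cong) auto
        also have "\<dots> = hz w (\<zeta> u) ^ card {x. x \<in> ?T - {root0} \<and> par0 x = u}" by (rule prod_constant)
        finally show ?thesis unfolding nch_def by simp
      qed
      ultimately show ?thesis by simp
    qed
    finally have st: "(\<Prod>v\<in>?T - {root0}. step_prob w (\<zeta> (tparent root0 v)) (\<zeta> v)) =
       (\<Prod>v\<in>?T - {root0}. w (\<zeta> v)) / (\<Prod>u\<in>?T. hz w (\<zeta> u) ^ nch ?T u)" .
    have aprod: "(\<Prod>v\<in>?T. aF w ?T v (\<zeta> v)) =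
        (\<Prod>v\<in>?T. w (\<zeta> v)) * (\<Prod>v\<in>?T. (if v = root0 then hz w (\<zeta> v) else 1)) / (\<Prod>u\<in>?T. hz w (\<zeta> u) ^ nch ?T u)"
      unfolding aF_def by (simp add: prod_dividef prod.distrib)
    have p1: "(\<Prod>v\<in>?T. (if v = root0 then hz w (\<zeta> v) else 1)) = hz w (\<zeta> root0)"
      using fT r by (simp add: prod.delta)
    have p2: "(\<Prod>v\<in>?T. w (\<zeta> v)) = w (\<zeta> root0) * (\<Prod>v\<in>?T - {root0}. w (\<zeta> v))"
      by (rule prod.remove[OF fT r])
    have rt: "root_prob w (\<zeta> root0) = w (\<zeta> root0) * hz w (\<zeta> root0) / Kc w"
      using hn r by (simp add: root_prob_alt)
    have alg: "\<And>a b A H K. (a * b / K) * (A / H) = 1 * ((a * A) * b / H) / (K::real)"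
      by (simp add: mult.commute mult.left_commute)
    show ?thesis unfolding wform_def st aprod p1 p2 rt if_P[OF True] by (rule alg)
  qed
qed

definition child :: "tvert \<Rightarrow> nat \<Rightarrow> tvert" where "child v d = Abs_tvert (Rep_tvert v @ [d])"

lemma nch_inner:
  assumes v: "length (Rep_tvert v) < R"
  shows "nch (ball R) v = (if v = root0 then 3 else 2)"
proof -
  define Dv where "Dv = {d \<in> {0,1,2::nat}. Rep_tvert v = [] \<or> last (Rep_tvert v) \<noteq> d}"
  have vd: "valid (Rep_tvert v @ [d])" if "d \<in> Dv" for d
    using that valid_Rep[of v] by (auto simp: Dv_def valid_snoc)
  have Rc: "Rep_tvert (child v d) = Rep_tvert v @ [d]" if "d \<in> Dv" for d
    unfolding child_def by (rule Abs_inv[OF vd[OF that]])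
  have eq: "{s \<in> ball R - {root0}. par0 s = v} = child v ` Dv"
  proof (intro set_eqI iffI)
    fix s assume s: "s \<in> {s \<in> ball R - {root0}. par0 s = v}"
    then have ne: "Rep_tvert s \<noteq> []" by (auto simp: ne_root0)
    have bl: "butlast (Rep_tvert s) = Rep_tvert v" using s by (metis (mono_tags) Rep_par0 mem_Collect_eq)
    have es: "Rep_tvert s = Rep_tvert v @ [last (Rep_tvert s)]" using ne bl by (metis append_butlast_last_id)
    then have "valid (Rep_tvert v @ [last (Rep_tvert s)])" using valid_Rep[of s] by simp
    then have d: "last (Rep_tvert s) \<in> Dv" by (auto simp: Dv_def valid_snoc)
    have "s = child v (last (Rep_tvert s))" using Rc[OF d] es by (metis Rep_tvert_inject)
    then show "s \<in> child v ` Dv" by (rule image_eqI[OF _ d])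
  next
    fix s assume "s \<in> child v ` Dv"
    then obtain d where d: "d \<in> Dv" "s = child v d" by blast
    have "Rep_tvert s = Rep_tvert v @ [d]" using Rc d by simp
    then show "s \<in> {s \<in> ball R - {root0}. par0 s = v}"
      using v by (auto simp: ball_def ne_root0 par0_def Rep_tvert_inverse)
  qed
  have inj: "inj_on (child v) Dv"
  proof
    fix d1 d2 assume "d1 \<in> Dv" "d2 \<in> Dv" "child v d1 = child v d2"
    then have "Rep_tvert v @ [d1] = Rep_tvert v @ [d2]" using Rc by metis
    then show "d1 = d2" by simp
  qed
  have cD: "card Dv = (if v = root0 then 3 else 2)"
  proof (cases "v = root0")
    case True
    then have "Dv = {0,1,2}" by (auto simp: Dv_def)
    then show ?thesis using True by simp
  next
    case False
    then have ne: "Rep_tvert v \<noteq> []" by (simp add: ne_root0)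
    then have l: "last (Rep_tvert v) \<in> {0,1,2}" using set_Rep[of v] last_in_set by blast
    have "Dv = {0,1,2} - {last (Rep_tvert v)}" using ne by (auto simp: Dv_def)
    then show ?thesis using l False by auto
  qed
  show ?thesis unfolding nch_def eq card_image[OF inj] cD ..
qed

lemma aF_inner:
  assumes w: "wposi w" and v: "length (Rep_tvert v) < R" and j: "j \<in> hnodes"
  shows "aF w (ball R) v j = lam_of w j"
proof -
  have h: "hz w j \<noteq> 0" using hz_nz[OF w j] .
  show ?thesis unfolding aF_def lam_of_def nch_inner[OF v] using h
    by (cases "v = root0") (simp_all add: power2_eq_square power3_eq_cube)
qed

definition Rest :: "tvert set \<Rightarrow> nat \<Rightarrow> (tvert \<Rightarrow> nat) \<Rightarrow> bool" where
  "Rest U R \<xi> \<longleftrightarrow> (\<forall>v\<in>ball R - {root0}. v \<notin> U \<and> par0 v \<notin> U \<longrightarrow> hadj (\<xi> (par0 v)) (\<xi> v))"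

lemma tadj_cases2: "tadj a b \<Longrightarrow> (a \<noteq> root0 \<and> b = par0 a) \<or> (b \<noteq> root0 \<and> a = par0 b)"
proof -
  assume t: "tadj a b"
  from tadj_cases[OF t] show ?thesis
  proof
    assume "b = par0 a \<and> a \<noteq> root0" then show ?thesis by simp
  next
    assume "\<exists>d. Rep_tvert b = Rep_tvert a @ [d]"
    then obtain d where d: "Rep_tvert b = Rep_tvert a @ [d]" by blast
    then have "b \<noteq> root0" by (simp add: ne_root0)
    moreover have "a = par0 b" using d by (simp add: par0_def Rep_tvert_inverse)
    ultimately show ?thesis by simp
  qed
qed

lemma F4:
  assumes U: "\<forall>v\<in>U. length (Rep_tvert v) < R"
  shows "(\<forall>v\<in>ball R - {root0}. hadj (merge_cfg U \<eta> \<xi> (par0 v)) (merge_cfg U \<eta> \<xi> v)) \<longleftrightarrow>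
     (\<forall>a b. a \<in> U \<and> tadj a b \<longrightarrow> hadj (merge_cfg U \<eta> \<xi> a) (merge_cfg U \<eta> \<xi> b)) \<and> Rest U R \<xi>"
  (is "?L \<longleftrightarrow> ?E \<and> ?R")
proof
  assume L: ?L
  show "?E \<and> ?R"
  proof
    show ?E
    proof (intro allI impI)
      fix a b assume ab: "a \<in> U \<and> tadj a b"
      have aR: "a \<in> ball R" using U ab by (auto simp: ball_def)
      have "(a \<noteq> root0 \<and> b = par0 a) \<or> (b \<noteq> root0 \<and> a = par0 b)" using tadj_cases2 ab by blast
      then show "hadj (merge_cfg U \<eta> \<xi> a) (merge_cfg U \<eta> \<xi> b)"
      proof
        assume "a \<noteq> root0 \<and> b = par0 a"
        then show ?thesis using L aR hadj_sym by blast
      next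
        assume h: "b \<noteq> root0 \<and> a = par0 b"
        have "b \<in> ball R" using tadj_length[of a b] ab U by (auto simp: ball_def)
        then show ?thesis using L h by blast
      qed
    qed
    show ?R unfolding Rest_def
    proof (intro ballI impI)
      fix v assume v: "v \<in> ball R - {root0}" "v \<notin> U \<and> par0 v \<notin> U"
      then have "hadj (merge_cfg U \<eta> \<xi> (par0 v)) (merge_cfg U \<eta> \<xi> v)" using L by blast
      then show "hadj (\<xi> (par0 v)) (\<xi> v)" using v(2) by (simp add: merge_cfg_def)
    qed
  qed
next
  assume ER: "?E \<and> ?R"
  show ?L
  proof
    fix v assume v: "v \<in> ball R - {root0}"
    have t: "tadj v (par0 v)" "tadj (par0 v) v" using tadj_par0 v tadj_sym by auto
    show "hadj (merge_cfg U \<eta> \<xi> (par0 v)) (merge_cfg U \<eta> \<xi> v)"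
    proof (cases "v \<in> U")
      case True then show ?thesis using ER t hadj_sym by blast
    next
      case False
      show ?thesis
      proof (cases "par0 v \<in> U")
        case True then show ?thesis using ER t by blast
      next
        case False2: False
        then show ?thesis using ER v False by (auto simp: Rest_def merge_cfg_def)
      qed
    qed
  qed
qed

definition Cst :: "(nat \<Rightarrow> real) \<Rightarrow> real \<Rightarrow> tvert set \<Rightarrow> nat \<Rightarrow> (tvert \<Rightarrow> nat) \<Rightarrow> real" where
  "Cst w c U R \<xi> = (if Rest U R \<xi> then 1 else 0) * c ^ card U * (\<Prod>v\<in>ball R - U. aF w (ball R) v (\<xi> v)) / Kc w"

lemma aux: "(if e \<and> r then 1 else 0) * (P * (C * L)) / K =
   (if r then 1 else 0) * C * P / K * (if e then L else (0::real))"
  by (cases e; cases r) simp_all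

lemma KF:
  assumes w: "wposi w" and lc: "\<forall>j\<in>hnodes. lam_of w j = c * lam j"
    and U: "\<forall>v\<in>U. length (Rep_tvert v) < R" and fU: "finite U"
    and \<eta>: "\<eta> \<in> PiE U (\<lambda>_. hnodes)" and \<xi>h: "\<forall>v\<in>ball R - U. \<xi> v \<in> hnodes"
  shows "wform w root0 (ball R) (merge_cfg U \<eta> \<xi>) = Cst w c U R \<xi> * spec_weight lam U \<xi> \<eta>"
proof -
  let ?z = "merge_cfg U \<eta> \<xi>"
  have UR: "U \<subseteq> ball R" using U by (auto simp: ball_def)
  have hn: "\<forall>v\<in>ball R. ?z v \<in> hnodes" using \<eta> \<xi>h by (auto simp: merge_cfg_def PiE_def Pi_def)
  let ?E = "\<forall>a b. a \<in> U \<and> tadj a b \<longrightarrow> hadj (?z a) (?z b)"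
  have split: "(\<Prod>v\<in>ball R. aF w (ball R) v (?z v)) =
      (\<Prod>v\<in>ball R - U. aF w (ball R) v (\<xi> v)) * (c ^ card U * (\<Prod>v\<in>U. lam (\<eta> v)))"
  proof -
    have "(\<Prod>v\<in>ball R. aF w (ball R) v (?z v)) = (\<Prod>v\<in>ball R - U. aF w (ball R) v (?z v)) * (\<Prod>v\<in>U. aF w (ball R) v (?z v))"
      by (rule prod.subset_diff[OF UR finite_ball])
    moreover have "(\<Prod>v\<in>ball R - U. aF w (ball R) v (?z v)) = (\<Prod>v\<in>ball R - U. aF w (ball R) v (\<xi> v))"
      by (rule prod.cong) (auto simp: merge_cfg_def)
    moreover have "(\<Prod>v\<in>U. aF w (ball R) v (?z v)) = (\<Prod>v\<in>U. c * lam (\<eta> v))"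
    proof (rule prod.cong[OF refl])
      fix v assume v: "v \<in> U"
      have "\<eta> v \<in> hnodes" using \<eta> v by (auto simp: PiE_def Pi_def)
      then show "aF w (ball R) v (?z v) = c * lam (\<eta> v)"
        using aF_inner[OF w U[rule_format, OF v]] lc v by (simp add: merge_cfg_def)
    qed
    moreover have "(\<Prod>v\<in>U. c * lam (\<eta> v)) = c ^ card U * (\<Prod>v\<in>U. lam (\<eta> v))"
      by (simp add: prod.distrib)
    ultimately show ?thesis by simp
  qed
  have sw: "spec_weight lam U \<xi> \<eta> = (if ?E then (\<Prod>v\<in>U. lam (\<eta> v)) else 0)"
    by (simp add: spec_weight_def)
  show ?thesis
    unfolding F1[OF w hn] F4[OF U] split sw Cst_def
    by (rule aux)
qed

lemma merge_restrict: "merge_cfg U (restrict \<xi> U) \<xi> = \<xi>"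
  by (auto simp: merge_cfg_def fun_eq_iff)

lemma sw_nonneg:
  assumes "\<forall>j\<in>hnodes. lam j \<ge> 0" "\<eta> \<in> PiE U (\<lambda>_. hnodes)"
  shows "spec_weight lam U \<omega> \<eta> \<ge> 0"
  using assms unfolding spec_weight_def by (auto intro!: prod_nonneg simp: PiE_def Pi_def)

lemma sw_le_Z:
  assumes "\<forall>j\<in>hnodes. lam j \<ge> 0" "\<eta> \<in> PiE U (\<lambda>_. hnodes)" "finite U"
  shows "spec_weight lam U \<omega> \<eta> \<le> spec_Z lam U \<omega>"
  unfolding spec_Z_def
  by (rule member_le_sum) (use assms sw_nonneg in \<open>auto intro: finite_PiE\<close>)

lemma Z_nonneg:
  assumes "\<forall>j\<in>hnodes. lam j \<ge> 0"
  shows "spec_Z lam U \<omega> \<ge> 0"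
  unfolding spec_Z_def by (rule sum_nonneg) (use assms sw_nonneg in auto)

lemma cyl_union_U:
  assumes UR: "U \<subseteq> D" and fD: "finite D"
  shows "cyl (D - U) \<xi> = (\<Union>\<eta>\<in>PiE U (\<lambda>_. hnodes). cyl D (merge_cfg U \<eta> \<xi>))"
proof (intro set_eqI iffI)
  fix \<phi> assume h: "\<phi> \<in> cyl (D - U) \<xi>"
  then have "restrict \<phi> U \<in> PiE U (\<lambda>_. hnodes)" by (auto simp: cyl_def space_cfg)
  moreover have "\<phi> \<in> cyl D (merge_cfg U (restrict \<phi> U) \<xi>)" using h by (auto simp: cyl_def merge_cfg_def)
  ultimately show "\<phi> \<in> (\<Union>\<eta>\<in>PiE U (\<lambda>_. hnodes). cyl D (merge_cfg U \<eta> \<xi>))" by blast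
next
  fix \<phi> assume "\<phi> \<in> (\<Union>\<eta>\<in>PiE U (\<lambda>_. hnodes). cyl D (merge_cfg U \<eta> \<xi>))"
  then show "\<phi> \<in> cyl (D - U) \<xi>" by (auto simp: cyl_def merge_cfg_def)
qed

lemma disj_U: "disjoint_family_on (\<lambda>\<eta>. cyl D (merge_cfg U \<eta> \<xi>)) (PiE U (\<lambda>_. hnodes))" if "U \<subseteq> D"
proof (unfold disjoint_family_on_def, intro ballI impI)
  fix \<eta>1 \<eta>2 assume h: "\<eta>1 \<in> PiE U (\<lambda>_. hnodes)" "\<eta>2 \<in> PiE U (\<lambda>_. hnodes)" "\<eta>1 \<noteq> \<eta>2"
  then obtain v where v: "v \<in> U" "\<eta>1 v \<noteq> \<eta>2 v" by (metis PiE_ext)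
  then show "cyl D (merge_cfg U \<eta>1 \<xi>) \<inter> cyl D (merge_cfg U \<eta>2 \<xi>) = {}"
    using that by (auto simp: cyl_def merge_cfg_def)
qed

lemma DLR_cyl_value:
  assumes W: "walk_law w root0 \<mu>" and w: "wposi w" and lc: "\<forall>j\<in>hnodes. lam_of w j = c * lam j"
    and lnn: "\<forall>j\<in>hnodes. lam j \<ge> 0"
    and fU: "finite U" and R: "Rdl U \<le> R"
  shows "measure \<mu> (cyl (ball R) \<xi>) =
    (if restrict \<xi> U \<in> PiE U (\<lambda>_. hnodes)
     then spec_weight lam U \<xi> (restrict \<xi> U) / spec_Z lam U \<xi> * measure \<mu> (cyl (ball R - U) \<xi>) else 0)"
proof -
  have P: "prob_space \<mu>" and Se: "sets \<mu> = sets cfg_space"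
    and F: "\<And>S \<eta>. rooted root0 S \<Longrightarrow> measure \<mu> (cyl S \<eta>) = wform w root0 S \<eta>"
    using W by (auto simp: walk_law_iff)
  interpret M: prob_space \<mu> by (rule P)
  have U: "\<forall>v\<in>U. length (Rep_tvert v) < R" using Rdl_lt[OF fU] R by fastforce
  have UR: "U \<subseteq> ball R" using U by (auto simp: ball_def)
  show ?thesis
  proof (cases "\<forall>v\<in>ball R. \<xi> v \<in> hnodes")
    case False
    then obtain v where v: "v \<in> ball R" "\<xi> v \<notin> hnodes" by blast
    have L: "cyl (ball R) \<xi> = {}" by (rule cyl_is_empty[of v "ball R" \<xi>, OF v])
    show ?thesis
    proof (cases "v \<in> U")
      case True
      then have "restrict \<xi> U \<notin> PiE U (\<lambda>_. hnodes)" using v by (auto simp: PiE_def Pi_def)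
      then show ?thesis using L by simp
    next
      case False
      then have "cyl (ball R - U) \<xi> = {}" using v by (intro cyl_is_empty[of v]) auto
      then show ?thesis using L by simp
    qed
  next
    case True
    have rin: "restrict \<xi> U \<in> PiE U (\<lambda>_. hnodes)" using True UR by auto
    have xh: "\<forall>v\<in>ball R - U. \<xi> v \<in> hnodes" using True by blast
    have K: "\<And>\<eta>. \<eta> \<in> PiE U (\<lambda>_. hnodes) \<Longrightarrow> measure \<mu> (cyl (ball R) (merge_cfg U \<eta> \<xi>)) = Cst w c U R \<xi> * spec_weight lam U \<xi> \<eta>"
      using F[OF rooted_ball] KF[OF w lc U fU _ xh] by simp
    have "measure \<mu> (cyl (ball R - U) \<xi>) = (\<Sum>\<eta>\<in>PiE U (\<lambda>_. hnodes). measure \<mu> (cyl (ball R) (merge_cfg U \<eta> \<xi>)))"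
      unfolding cyl_union_U[OF UR finite_ball]
      by (rule M.finite_measure_finite_Union) (use Se cyl_sets finite_ball disj_U[OF UR] fU in \<open>auto intro: finite_PiE\<close>)
    also have "\<dots> = Cst w c U R \<xi> * spec_Z lam U \<xi>"
      unfolding spec_Z_def by (simp add: K sum_distrib_left)
    finally have D: "measure \<mu> (cyl (ball R - U) \<xi>) = Cst w c U R \<xi> * spec_Z lam U \<xi>" .
    have L: "measure \<mu> (cyl (ball R) \<xi>) = Cst w c U R \<xi> * spec_weight lam U \<xi> (restrict \<xi> U)"
      using K[OF rin] by (simp add: merge_restrict)
    show ?thesis
    proof (cases "spec_Z lam U \<xi> = 0")
      case True
      have "spec_weight lam U \<xi> (restrict \<xi> U) = 0"
        using sw_le_Z[OF lnn rin fU, of \<xi>] sw_nonneg[OF lnn rin, of \<xi>] True by simp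
      then show ?thesis using L rin by simp
    next
      case False
      then show ?thesis using L D rin by simp
    qed
  qed
qed

definition gw :: "(nat \<Rightarrow> real) \<Rightarrow> tvert set \<Rightarrow> (tvert \<Rightarrow> nat) \<Rightarrow> (tvert \<Rightarrow> nat) \<Rightarrow> real" where
  "gw lam U \<eta> \<omega> = spec_weight lam U \<omega> \<eta> / spec_Z lam U \<omega>"

definition nu :: "(tvert \<Rightarrow> nat) measure \<Rightarrow> (nat \<Rightarrow> real) \<Rightarrow> tvert set \<Rightarrow> (tvert \<Rightarrow> nat) \<Rightarrow> (tvert \<Rightarrow> nat) measure" where
  "nu \<mu> lam U \<eta> = distr (density \<mu> (\<lambda>\<omega>. ennreal (gw lam U \<eta> \<omega>))) cfg_space (\<lambda>\<omega>. merge_cfg U \<eta> \<omega>)"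

lemma gw_meas: "finite U \<Longrightarrow> gw lam U \<eta> \<in> borel_measurable cfg_space"
proof -
  assume fU: "finite U"
  have fb: "finite (bd U)" using bd_ball[OF fU] finite_ball finite_subset by blast
  show ?thesis
  proof (rule fin_dep_meas[OF fb])
    fix \<omega> \<omega>' :: "tvert \<Rightarrow> nat"
    assume "\<omega> \<in> space cfg_space" "\<omega>' \<in> space cfg_space" and a: "\<forall>v\<in>bd U. \<omega> v = \<omega>' v"
    show "gw lam U \<eta> \<omega> = gw lam U \<eta> \<omega>'" unfolding gw_def sw_dep[OF a] sZ_dep[OF a] ..
  qed
qed

lemma gw_bnd:
  assumes lnn: "\<forall>j\<in>hnodes. lam j \<ge> 0" and \<eta>: "\<eta> \<in> PiE U (\<lambda>_. hnodes)" and fU: "finite U"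
  shows "0 \<le> gw lam U \<eta> \<omega> \<and> gw lam U \<eta> \<omega> \<le> 1"
proof -
  have a: "0 \<le> spec_weight lam U \<omega> \<eta>" by (rule sw_nonneg[OF lnn \<eta>])
  have b: "spec_weight lam U \<omega> \<eta> \<le> spec_Z lam U \<omega>" by (rule sw_le_Z[OF lnn \<eta> fU])
  show ?thesis unfolding gw_def using a b by (auto simp: divide_le_eq_1)
qed

lemma nu_facts:
  assumes P: "prob_space \<mu>" and Se: "sets \<mu> = sets cfg_space"
    and lnn: "\<forall>j\<in>hnodes. lam j \<ge> 0" and \<eta>: "\<eta> \<in> PiE U (\<lambda>_. hnodes)" and fU: "finite U"
  shows nu_val: "\<And>B. B \<in> sets cfg_space \<Longrightarrow> measure (nu \<mu> lam U \<eta>) B =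
            (\<integral>\<omega>. gw lam U \<eta> \<omega> * indicator B (merge_cfg U \<eta> \<omega>) \<partial>\<mu>)"
    and nu_int: "\<And>B. B \<in> sets cfg_space \<Longrightarrow> integrable \<mu> (\<lambda>\<omega>. gw lam U \<eta> \<omega> * indicator B (merge_cfg U \<eta> \<omega>))"
    and nu_fin: "finite_measure (nu \<mu> lam U \<eta>)"
    and nu_sets: "sets (nu \<mu> lam U \<eta>) = sets cfg_space"
    and nu_space: "space (nu \<mu> lam U \<eta>) = space cfg_space"
proof -
  interpret M: prob_space \<mu> by (rule P)
  have sp: "space \<mu> = space cfg_space" using Se by (rule sets_eq_imp_space_eq)
  let ?g = "gw lam U \<eta>" let ?m = "\<lambda>\<omega>. merge_cfg U \<eta> \<omega>"
  have gm: "?g \<in> borel_measurable \<mu>" using Se gw_meas[OF fU] by (rule measurable_cfg_cong)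
  have mm: "?m \<in> measurable \<mu> cfg_space" using Se merge_meas[OF \<eta>] by (rule measurable_cfg_cong)
  have mmd: "?m \<in> measurable (density \<mu> (\<lambda>\<omega>. ennreal (?g \<omega>))) cfg_space"
    using mm by (simp add: measurable_cong_sets[OF sets_density refl])
  have bnd: "\<And>\<omega>. 0 \<le> ?g \<omega> \<and> ?g \<omega> \<le> 1" using gw_bnd[OF lnn \<eta> fU] by blast
  have indm: "(\<lambda>\<omega>. indicator B (?m \<omega>) :: real) \<in> borel_measurable \<mu>" if "B \<in> sets cfg_space" for B
    using measurable_compose[OF mm borel_measurable_indicator[OF that]] by (simp add: comp_def)
  show intg: "integrable \<mu> (\<lambda>\<omega>. ?g \<omega> * indicator B (?m \<omega>))" if "B \<in> sets cfg_space" for B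
  proof (rule M.integrable_const_bound[where B=1])
    show "AE x in \<mu>. norm (?g x * indicator B (?m x)) \<le> 1" using bnd by (auto simp: indicator_def)
    show "(\<lambda>\<omega>. ?g \<omega> * indicator B (?m \<omega>)) \<in> borel_measurable \<mu>" using gm indm[OF that] by simp
  qed
  have eme: "emeasure (nu \<mu> lam U \<eta>) B = (\<integral>\<^sup>+\<omega>. ennreal (?g \<omega> * indicator B (?m \<omega>)) \<partial>\<mu>)"
    if B: "B \<in> sets cfg_space" for B
  proof -
    have "emeasure (nu \<mu> lam U \<eta>) B = emeasure (density \<mu> (\<lambda>\<omega>. ennreal (?g \<omega>))) (?m -` B \<inter> space \<mu>)"
      unfolding nu_def by (subst emeasure_distr[OF mmd B]) simp
    also have "\<dots> = (\<integral>\<^sup>+\<omega>. ennreal (?g \<omega>) * indicator (?m -` B \<inter> space \<mu>) \<omega> \<partial>\<mu>)"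
      by (rule emeasure_density) (use gm measurable_sets[OF mm B] in auto)
    also have "\<dots> = (\<integral>\<^sup>+\<omega>. ennreal (?g \<omega> * indicator B (?m \<omega>)) \<partial>\<mu>)"
      by (rule nn_integral_cong) (use bnd in \<open>auto simp: indicator_def\<close>)
    finally show ?thesis .
  qed
  show "measure (nu \<mu> lam U \<eta>) B = (\<integral>\<omega>. ?g \<omega> * indicator B (?m \<omega>) \<partial>\<mu>)" if B: "B \<in> sets cfg_space" for B
    unfolding measure_def eme[OF B]
    by (rule enn2real_nn_integral_eq_integral) (use bnd gm indm[OF B] in auto)
  show ns: "sets (nu \<mu> lam U \<eta>) = sets cfg_space" by (simp add: nu_def)
  show "space (nu \<mu> lam U \<eta>) = space cfg_space" by (simp add: nu_def)
  show "finite_measure (nu \<mu> lam U \<eta>)"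
  proof (rule finite_measureI)
    have "emeasure (nu \<mu> lam U \<eta>) (space (nu \<mu> lam U \<eta>)) = (\<integral>\<^sup>+\<omega>. ennreal (?g \<omega> * indicator (space cfg_space) (?m \<omega>)) \<partial>\<mu>)"
      using eme[of "space cfg_space"] by (simp add: nu_def)
    also have "\<dots> \<le> (\<integral>\<^sup>+\<omega>. 1 \<partial>\<mu>)"
      by (rule nn_integral_mono) (use bnd in \<open>auto simp: indicator_def\<close>)
    also have "\<dots> = 1" by (simp add: M.emeasure_space_1)
    finally show "emeasure (nu \<mu> lam U \<eta>) (space (nu \<mu> lam U \<eta>)) \<noteq> \<infinity>" by (auto simp: top_unique)
  qed
qed

lemma basic_nu:
  assumes W: "walk_law w root0 \<mu>" and w: "wposi w" and lc: "\<forall>j\<in>hnodes. lam_of w j = c * lam j"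
    and lnn: "\<forall>j\<in>hnodes. lam j \<ge> 0" and fU: "finite U" and R: "Rdl U \<le> R"
  shows "measure \<mu> (cyl (ball R) \<xi>) = (\<Sum>\<eta>\<in>PiE U (\<lambda>_. hnodes). measure (nu \<mu> lam U \<eta>) (cyl (ball R) \<xi>))"
proof -
  have P: "prob_space \<mu>" and Se: "sets \<mu> = sets cfg_space" using W by (auto simp: walk_law_iff)
  interpret M: prob_space \<mu> by (rule P)
  have sp: "space \<mu> = space cfg_space" using Se by (rule sets_eq_imp_space_eq)
  have U: "\<forall>v\<in>U. length (Rep_tvert v) < R" using Rdl_lt[OF fU] R by fastforce
  have UR: "U \<subseteq> ball R" using U by (auto simp: ball_def)
  have bdR: "bd U \<subseteq> ball R - U" using bd_ball[OF fU] ball_mono[OF R] by (auto simp: bd_def)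
  let ?B = "cyl (ball R) \<xi>" let ?D = "cyl (ball R - U) \<xi>"
  have Ds: "?D \<in> sets \<mu>" using Se cyl_sets finite_ball by simp
  have trm: "measure (nu \<mu> lam U \<eta>) ?B =
     (if \<eta> = restrict \<xi> U then gw lam U \<eta> \<xi> * measure \<mu> ?D else 0)" if \<eta>: "\<eta> \<in> PiE U (\<lambda>_. hnodes)" for \<eta>
  proof -
    have "measure (nu \<mu> lam U \<eta>) ?B = (\<integral>\<omega>. gw lam U \<eta> \<omega> * indicator ?B (merge_cfg U \<eta> \<omega>) \<partial>\<mu>)"
      by (rule nu_val[OF P Se lnn \<eta> fU cyl_sets[OF finite_ball]])
    also have "\<dots> = (\<integral>\<omega>. (if \<eta> = restrict \<xi> U then gw lam U \<eta> \<xi> else 0) * indicator ?D \<omega> \<partial>\<mu>)"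
    proof (rule Bochner_Integration.integral_cong[OF refl])
      fix \<omega> assume \<omega>: "\<omega> \<in> space \<mu>"
      have ms: "merge_cfg U \<eta> \<omega> \<in> space cfg_space" using merge_space[OF \<eta>] \<omega> sp by simp
      have e1: "merge_cfg U \<eta> \<omega> \<in> ?B \<longleftrightarrow> (\<forall>v\<in>U. \<eta> v = \<xi> v) \<and> \<omega> \<in> ?D"
        using ms \<omega> sp UR by (auto simp: cyl_def merge_cfg_def)
      have e2: "(\<forall>v\<in>U. \<eta> v = \<xi> v) \<longleftrightarrow> \<eta> = restrict \<xi> U"
        using \<eta> by (auto simp: PiE_def extensional_def fun_eq_iff)
      have e3: "\<omega> \<in> ?D \<Longrightarrow> gw lam U \<eta> \<omega> = gw lam U \<eta> \<xi>"
      proof -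
        assume "\<omega> \<in> ?D"
        then have a: "\<forall>v\<in>bd U. \<omega> v = \<xi> v" using bdR by (auto simp: cyl_def)
        show ?thesis unfolding gw_def sw_dep[OF a] sZ_dep[OF a] ..
      qed
      show "gw lam U \<eta> \<omega> * indicator ?B (merge_cfg U \<eta> \<omega>) =
            (if \<eta> = restrict \<xi> U then gw lam U \<eta> \<xi> else 0) * indicator ?D \<omega>"
        using e1 e2 e3 by (auto simp: indicator_def)
    qed
    also have "\<dots> = (if \<eta> = restrict \<xi> U then gw lam U \<eta> \<xi> else 0) * measure \<mu> ?D"
    proof -
      have "?D \<inter> space cfg_space = ?D" by (auto simp: cyl_def)
      then show ?thesis using Ds sp by simp
    qed
    finally show ?thesis by simp
  qed
  have "(\<Sum>\<eta>\<in>PiE U (\<lambda>_. hnodes). measure (nu \<mu> lam U \<eta>) ?B) =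
        (\<Sum>\<eta>\<in>PiE U (\<lambda>_. hnodes). (if \<eta> = restrict \<xi> U then gw lam U \<eta> \<xi> * measure \<mu> ?D else 0))"
    using trm by (rule sum.cong[OF refl])
  also have "\<dots> = (if restrict \<xi> U \<in> PiE U (\<lambda>_. hnodes) then gw lam U (restrict \<xi> U) \<xi> * measure \<mu> ?D else 0)"
    by (simp add: sum.delta' fU finite_PiE)
  also have "\<dots> = measure \<mu> ?B"
    using DLR_cyl_value[OF W w lc lnn fU R] by (simp add: gw_def)
  finally show ?thesis by simp
qed

lemma cyl_disj_fam: "disjoint_family_on (\<lambda>\<xi>. cyl D \<xi>) (PiE D (\<lambda>_. hnodes))"
  unfolding disjoint_family_on_def
proof (intro ballI impI)
  fix \<xi>1 \<xi>2 assume h: "\<xi>1 \<in> PiE D (\<lambda>_. hnodes)" "\<xi>2 \<in> PiE D (\<lambda>_. hnodes)" "\<xi>1 \<noteq> \<xi>2"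
  then obtain v where "v \<in> D" "\<xi>1 v \<noteq> \<xi>2 v" by (metis PiE_ext)
  then show "cyl D \<xi>1 \<inter> cyl D \<xi>2 = {}" by (auto simp: cyl_def)
qed

lemma DLR_all:
  assumes W: "walk_law w root0 \<mu>" and w: "wposi w" and lc: "\<forall>j\<in>hnodes. lam_of w j = c * lam j"
    and lnn: "\<forall>j\<in>hnodes. lam j \<ge> 0" and fU: "finite U" and A: "A \<in> sets cfg_space"
  shows "measure \<mu> A = (\<Sum>\<eta>\<in>PiE U (\<lambda>_. hnodes). measure (nu \<mu> lam U \<eta>) A)"
proof -
  have P: "prob_space \<mu>" and Se: "sets \<mu> = sets cfg_space" using W by (auto simp: walk_law_iff)
  interpret M: prob_space \<mu> by (rule P)
  have sp: "space \<mu> = space cfg_space" using Se by (rule sets_eq_imp_space_eq)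
  let ?PE = "PiE U (\<lambda>_. hnodes)"
  have fPE: "finite ?PE" using fU by (simp add: finite_PiE)
  let ?R = "Rdl U"
  let ?P = "\<lambda>B. measure \<mu> B = (\<Sum>\<eta>\<in>?PE. measure (nu \<mu> lam U \<eta>) B)"
  have NF: "\<And>\<eta>. \<eta> \<in> ?PE \<Longrightarrow> finite_measure (nu \<mu> lam U \<eta>)"
    by (rule nu_fin[OF P Se lnn _ fU])
  have NS: "\<And>\<eta>. \<eta> \<in> ?PE \<Longrightarrow> sets (nu \<mu> lam U \<eta>) = sets cfg_space"
    by (rule nu_sets[OF P Se lnn _ fU])
  have NP: "\<And>\<eta>. \<eta> \<in> ?PE \<Longrightarrow> space (nu \<mu> lam U \<eta>) = space cfg_space"
    by (rule nu_space[OF P Se lnn _ fU])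
  have bas: "?P B" if BE: "B \<in> Eg ?R" for B
  proof -
    obtain R' \<xi> where B: "B = cyl (ball R') \<xi>" "?R \<le> R'" using BE unfolding Eg_def by blast
    show ?thesis unfolding B(1) by (rule basic_nu[OF W w lc lnn fU B(2)])
  qed
  have POm: "?P (space cfg_space)"
  proof -
    let ?X = "PiE (ball ?R) (\<lambda>_. hnodes)"
    have fX: "finite ?X" by (simp add: finite_PiE finite_ball)
    have cs: "(\<lambda>\<xi>. cyl (ball ?R) \<xi>) ` ?X \<subseteq> sets cfg_space" using cyl_sets finite_ball by auto
    have "measure \<mu> (space cfg_space) = (\<Sum>\<xi>\<in>?X. measure \<mu> (cyl (ball ?R) \<xi>))"
      by (subst space_cover[of ?R], rule M.finite_measure_finite_Union) (use fX cs Se cyl_disj_fam in auto)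
    also have "\<dots> = (\<Sum>\<xi>\<in>?X. \<Sum>\<eta>\<in>?PE. measure (nu \<mu> lam U \<eta>) (cyl (ball ?R) \<xi>))"
    proof (rule sum.cong[OF refl])
      fix \<xi> show "measure \<mu> (cyl (ball ?R) \<xi>) = (\<Sum>\<eta>\<in>?PE. measure (nu \<mu> lam U \<eta>) (cyl (ball ?R) \<xi>))"
        by (rule bas) (auto simp: Eg_def)
    qed
    also have "\<dots> = (\<Sum>\<eta>\<in>?PE. \<Sum>\<xi>\<in>?X. measure (nu \<mu> lam U \<eta>) (cyl (ball ?R) \<xi>))" by (rule sum.swap)
    also have "\<dots> = (\<Sum>\<eta>\<in>?PE. measure (nu \<mu> lam U \<eta>) (space cfg_space))"
    proof (rule sum.cong[OF refl])
      fix \<eta> assume \<eta>: "\<eta> \<in> ?PE"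
      interpret N: finite_measure "nu \<mu> lam U \<eta>" by (rule NF[OF \<eta>])
      show "(\<Sum>\<xi>\<in>?X. measure (nu \<mu> lam U \<eta>) (cyl (ball ?R) \<xi>)) = measure (nu \<mu> lam U \<eta>) (space cfg_space)"
        by (subst space_cover[of ?R], rule N.finite_measure_finite_Union[symmetric]) (use fX cs NS[OF \<eta>] cyl_disj_fam in auto)
    qed
    finally show ?thesis .
  qed
  have "A \<in> sigma_sets (space cfg_space) (Eg ?R)" using A sets_Eg by blast
  from Int_stable_Eg[of ?R] Eg_Pow[of ?R] this show ?thesis
  proof (induction rule: sigma_sets_induct_disjoint)
    case (basic B) then show ?case by (rule bas)
  next
    case empty then show ?case by simp
  next
    case (compl B)
    have Bs: "B \<in> sets cfg_space" using compl(1) sets_Eg by blast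
    have "measure \<mu> (space cfg_space - B) = measure \<mu> (space cfg_space) - measure \<mu> B"
      using M.finite_measure_compl[of B] Bs Se sp by simp
    also have "\<dots> = (\<Sum>\<eta>\<in>?PE. measure (nu \<mu> lam U \<eta>) (space cfg_space) - measure (nu \<mu> lam U \<eta>) B)"
      using POm compl(2) by (simp add: sum_subtractf)
    also have "\<dots> = (\<Sum>\<eta>\<in>?PE. measure (nu \<mu> lam U \<eta>) (space cfg_space - B))"
    proof (rule sum.cong[OF refl])
      fix \<eta> assume \<eta>: "\<eta> \<in> ?PE"
      interpret N: finite_measure "nu \<mu> lam U \<eta>" by (rule NF[OF \<eta>])
      show "measure (nu \<mu> lam U \<eta>) (space cfg_space) - measure (nu \<mu> lam U \<eta>) B = measure (nu \<mu> lam U \<eta>) (space cfg_space - B)"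
        using N.finite_measure_compl[of B] Bs NS[OF \<eta>] NP[OF \<eta>] by simp
    qed
    finally show ?case .
  next
    case (union F)
    have Fs: "range F \<subseteq> sets cfg_space" using union(2) sets_Eg by blast
    have s1: "(\<lambda>i. measure \<mu> (F i)) sums measure \<mu> (\<Union>i. F i)"
      by (rule M.finite_measure_UNION) (use Fs Se union(1) in auto)
    have s2: "(\<lambda>i. \<Sum>\<eta>\<in>?PE. measure (nu \<mu> lam U \<eta>) (F i)) sums (\<Sum>\<eta>\<in>?PE. measure (nu \<mu> lam U \<eta>) (\<Union>i. F i))"
    proof (rule sums_sum)
      fix \<eta> assume \<eta>: "\<eta> \<in> ?PE"
      interpret N: finite_measure "nu \<mu> lam U \<eta>" by (rule NF[OF \<eta>])
      show "(\<lambda>i. measure (nu \<mu> lam U \<eta>) (F i)) sums measure (nu \<mu> lam U \<eta>) (\<Union>i. F i)"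
        by (rule N.finite_measure_UNION) (use Fs NS[OF \<eta>] union(1) in auto)
    qed
    have "(\<lambda>i. measure \<mu> (F i)) = (\<lambda>i. \<Sum>\<eta>\<in>?PE. measure (nu \<mu> lam U \<eta>) (F i))" using union(3) by simp
    then have s1': "(\<lambda>i. \<Sum>\<eta>\<in>?PE. measure (nu \<mu> lam U \<eta>) (F i)) sums measure \<mu> (\<Union>i. F i)" using s1 by simp
    show ?case by (rule sums_unique2[OF s1' s2])
  qed
qed

lemma gibbs_DLR:
  assumes W: "walk_law w root0 \<mu>" and w: "wposi w" and lc: "\<forall>j\<in>hnodes. lam_of w j = c * lam j"
    and lnn: "\<forall>j\<in>hnodes. lam j \<ge> 0" and fU: "finite U" and A: "A \<in> sets cfg_space"
  shows "measure \<mu> A = (\<integral>\<omega>. (\<Sum>\<eta>\<in>PiE U (\<lambda>_. hnodes).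
             spec_weight lam U \<omega> \<eta> / spec_Z lam U \<omega> * indicator A (merge_cfg U \<eta> \<omega>)) \<partial>\<mu>)"
proof -
  have P: "prob_space \<mu>" and Se: "sets \<mu> = sets cfg_space" using W by (auto simp: walk_law_iff)
  have "measure \<mu> A = (\<Sum>\<eta>\<in>PiE U (\<lambda>_. hnodes). measure (nu \<mu> lam U \<eta>) A)"
    by (rule DLR_all[OF W w lc lnn fU A])
  also have "\<dots> = (\<Sum>\<eta>\<in>PiE U (\<lambda>_. hnodes). \<integral>\<omega>. gw lam U \<eta> \<omega> * indicator A (merge_cfg U \<eta> \<omega>) \<partial>\<mu>)"
    by (rule sum.cong[OF refl]) (rule nu_val[OF P Se lnn _ fU A])
  also have "\<dots> = (\<integral>\<omega>. (\<Sum>\<eta>\<in>PiE U (\<lambda>_. hnodes). gw lam U \<eta> \<omega> * indicator A (merge_cfg U \<eta> \<omega>)) \<partial>\<mu>)"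
    by (rule Bochner_Integration.integral_sum[symmetric]) (rule nu_int[OF P Se lnn _ fU A])
  finally show ?thesis by (simp add: gw_def)
qed

lemma countable_tvert: "countable (UNIV :: tvert set)"
proof (rule countable_image_inj_on[of Rep_tvert])
  show "countable (Rep_tvert ` UNIV)" by (rule countable_subset[OF subset_UNIV]) simp
  show "inj_on Rep_tvert UNIV" by (simp add: inj_on_def Rep_tvert_inject)
qed

definition Ev :: "tvert \<Rightarrow> (tvert \<Rightarrow> nat) set" where
  "Ev v = {\<phi> \<in> space cfg_space. \<not> hadj (\<phi> (par0 v)) (\<phi> v)}"

lemma Ev_facts:
  assumes W: "walk_law w root0 \<mu>" and v: "v \<noteq> root0"
  shows "Ev v \<in> sets cfg_space \<and> measure \<mu> (Ev v) = 0"
proof -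
  have P: "prob_space \<mu>" and Se: "sets \<mu> = sets cfg_space"
    and F: "\<And>S \<eta>. rooted root0 S \<Longrightarrow> measure \<mu> (cyl S \<eta>) = wform w root0 S \<eta>"
    using W by (auto simp: walk_law_iff)
  interpret M: prob_space \<mu> by (rule P)
  let ?n = "length (Rep_tvert v)"
  let ?X = "{\<eta> \<in> PiE (ball ?n) (\<lambda>_. hnodes). \<not> hadj (\<eta> (par0 v)) (\<eta> v)}"
  have vb: "v \<in> ball ?n" "par0 v \<in> ball ?n" by (auto simp: ball_def Rep_par0)
  have fX: "finite ?X" by (rule finite_subset[of _ "PiE (ball ?n) (\<lambda>_. hnodes)"]) (auto intro: finite_PiE finite_ball)
  have E: "Ev v = (\<Union>\<eta>\<in>?X. cyl (ball ?n) \<eta>)"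
  proof -
    have "Ev v = {\<phi> \<in> space cfg_space. restrict \<phi> (ball ?n) \<in> ?X}"
      using vb by (auto simp: Ev_def space_cfg)
    also have "\<dots> = (\<Union>\<eta>\<in>?X. cyl (ball ?n) \<eta>)" by (rule cyl_decomp) (auto simp: finite_ball)
    finally show ?thesis .
  qed
  have cs: "(\<lambda>\<eta>. cyl (ball ?n) \<eta>) ` ?X \<subseteq> sets cfg_space" using cyl_sets finite_ball by auto
  have es: "Ev v \<in> sets cfg_space" unfolding E using fX cs by (intro sets.finite_UN) auto
  have z: "measure \<mu> (cyl (ball ?n) \<eta>) = 0" if \<eta>: "\<eta> \<in> ?X" for \<eta>
  proof -
    have "step_prob w (\<eta> (tparent root0 v)) (\<eta> v) = 0" using \<eta> v by (simp add: step_prob_def tparent_root0)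
    then have "(\<Prod>u\<in>ball ?n - {root0}. step_prob w (\<eta> (tparent root0 u)) (\<eta> u)) = 0"
      using vb v finite_ball by (intro prod_zero) blast+
    then show ?thesis using F[OF rooted_ball] by (simp add: wform_def)
  qed
  have "measure \<mu> (Ev v) = (\<Sum>\<eta>\<in>?X. measure \<mu> (cyl (ball ?n) \<eta>))"
    unfolding E
    by (rule M.finite_measure_finite_Union) (use fX cs Se disjoint_family_on_mono[OF _ cyl_disj_fam] in auto)
  also have "\<dots> = 0" using z by simp
  finally show ?thesis using es by simp
qed

lemma hom_eq: "hom_set = space cfg_space - (\<Union>v\<in>UNIV - {root0}. Ev v)"
proof (intro set_eqI iffI)
  fix \<phi> assume h: "\<phi> \<in> hom_set"
  have "\<phi> v \<in> hnodes" for v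
  proof (cases "v = root0")
    case True
    have "tadj root0 (leaf 0)" by (rule tadj_root0_leaf) simp
    then show ?thesis using h True hadj_hn by (auto simp: hom_set_def)
  next
    case False
    have "tadj v (par0 v)" by (rule tadj_par0[OF False])
    then show ?thesis using h hadj_hn by (auto simp: hom_set_def)
  qed
  moreover have "\<phi> \<notin> Ev v" if "v \<noteq> root0" for v
    using h tadj_par0[OF that] tadj_sym by (auto simp: hom_set_def Ev_def)
  ultimately show "\<phi> \<in> space cfg_space - (\<Union>v\<in>UNIV - {root0}. Ev v)" by (auto simp: space_cfg)
next
  fix \<phi> assume h: "\<phi> \<in> space cfg_space - (\<Union>v\<in>UNIV - {root0}. Ev v)"
  then have e: "\<And>v. v \<noteq> root0 \<Longrightarrow> hadj (\<phi> (par0 v)) (\<phi> v)" by (auto simp: Ev_def)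
  show "\<phi> \<in> hom_set" unfolding hom_set_def
  proof (intro CollectI allI impI)
    fix a b assume t: "tadj a b"
    from tadj_cases2[OF t] show "hadj (\<phi> a) (\<phi> b)"
    proof
      assume "a \<noteq> root0 \<and> b = par0 a" then show ?thesis using e hadj_sym by blast
    next
      assume "b \<noteq> root0 \<and> a = par0 b" then show ?thesis using e by blast
    qed
  qed
qed

lemma hom_one:
  assumes W: "walk_law w root0 \<mu>"
  shows "emeasure \<mu> hom_set = 1"
proof -
  have P: "prob_space \<mu>" and Se: "sets \<mu> = sets cfg_space" using W by (auto simp: walk_law_iff)
  interpret M: prob_space \<mu> by (rule P)
  have sp: "space \<mu> = space cfg_space" using Se by (rule sets_eq_imp_space_eq)
  have cnt: "countable (UNIV - {root0} :: tvert set)" using countable_tvert countable_subset by blast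
  have EF: "\<And>v. v \<in> UNIV - {root0} \<Longrightarrow> Ev v \<in> sets cfg_space \<and> measure \<mu> (Ev v) = 0"
    using Ev_facts[OF W] by blast
  have hs: "hom_set \<in> sets \<mu>" unfolding hom_eq Se
    using EF cnt by (intro sets.Diff sets.top sets.countable_UN'') auto
  have "AE \<phi> in \<mu>. \<phi> \<notin> Ev v" if v: "v \<in> UNIV - {root0}" for v
  proof (rule AE_I')
    show "Ev v \<in> null_sets \<mu>" using EF[OF v] Se by (auto simp: M.emeasure_eq_measure)
  qed auto
  then have "AE \<phi> in \<mu>. \<forall>v\<in>UNIV - {root0}. \<phi> \<notin> Ev v" by (subst AE_ball_countable[OF cnt]) auto
  then have "AE \<phi> in \<mu>. \<phi> \<in> hom_set" unfolding hom_eq by (rule AE_mp) (auto simp: sp intro!: AE_I2)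
  then show ?thesis by (rule M.emeasure_eq_1_AE[OF hs])
qed

lemma hnodes_eq: "hnodes = {1,2,3}" by (simp add: hnodes_def)
lemma hN1: "hN 1 = {1,2}" by (auto simp: hN_def hadj_def hnodes_def)
lemma hN1': "hN (Suc 0) = {1,2}" using hN1 by simp
lemma hN2: "hN 2 = {1,2,3}" by (auto simp: hN_def hadj_def hnodes_def)
lemma hN3: "hN 3 = {2,3}" by (auto simp: hN_def hadj_def hnodes_def)

lemma hzA: "hz wA 1 = 6" "hz wA 2 = 7" "hz wA 3 = 3" "hz wA (Suc 0) = 6"
  by (simp_all add: hz_def hN1 hN1' hN2 hN3 wA_def)
lemma hzB: "hz wB 1 = 3" "hz wB 2 = 7" "hz wB 3 = 6" "hz wB (Suc 0) = 3"
  by (simp_all add: hz_def hN1 hN1' hN2 hN3 wB_def)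

lemma wposA: "wposi wA" by (simp add: wposi_def hnodes_def wA_def)
lemma wposB: "wposi wB" by (simp add: wposi_def hnodes_def wB_def)

lemma lamA: "\<forall>i\<in>hnodes. lam_of wA i = (1/441) * lamT i"
  by (simp add: hnodes_eq lam_of_def hzA wA_def lamT_def)
lemma lamB: "\<forall>i\<in>hnodes. lam_of wB i = (1/441) * lamT i"
  by (simp add: hnodes_eq lam_of_def hzB wB_def lamT_def)

lemma lamT_nn: "\<forall>j\<in>hnodes. lamT j \<ge> 0" by (simp add: hnodes_eq lamT_def)

lemma rootA: "root_prob wA 1 = 24/41"
  by (simp add: root_prob_def hnodes_eq hzA wA_def)
lemma rootB: "root_prob wB 1 = 3/41"
  by (simp add: root_prob_def hnodes_eq hzB wB_def)

lemma good_measure: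
  assumes w: "wposi w" and lc: "\<forall>j\<in>hnodes. lam_of w j = c * lamT j"
  shows "simple_gibbs lamT (mu0 w) \<and> invariant_measure (mu0 w)"
proof -
  have W: "walk_law w root0 (mu0 w)" by (rule mu0_walk[OF w])
  have P: "prob_space (mu0 w)" and Se: "sets (mu0 w) = sets cfg_space" using W by (auto simp: walk_law_iff)
  have G: "gibbs lamT (mu0 w)" unfolding gibbs_def
    using P Se hom_one[OF W] gibbs_DLR[OF W w lc lamT_nn] by blast
  have S: "simple_gibbs lamT (mu0 w)" unfolding simple_gibbs_def
    using G simple_part[OF W w] by blast
  have I: "invariant_measure (mu0 w)" unfolding invariant_measure_def
    using invariance[OF W w] by blast
  show ?thesis using S I by blast
qed

theorem mainTheorem6:
  shows "(\<exists>c>0. \<forall>i\<in>hnodes. lam_of wA i = c * lamT i) \<and>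
         (\<exists>c>0. \<forall>i\<in>hnodes. lam_of wB i = c * lamT i) \<and>
         (\<forall>x. \<exists>\<mu>. walk_law wA x \<mu>) \<and>
         (\<forall>x. \<exists>\<mu>. walk_law wB x \<mu>) \<and>
         (\<forall>x x' \<mu> \<mu>'. walk_law wA x \<mu> \<longrightarrow> walk_law wB x' \<mu>' \<longrightarrow>
            simple_gibbs lamT \<mu> \<and> invariant_measure \<mu> \<and>
            simple_gibbs lamT \<mu>' \<and> invariant_measure \<mu>' \<and> \<mu> \<noteq> \<mu>')"
proof (intro conjI allI impI)
  show "\<exists>c>0. \<forall>i\<in>hnodes. lam_of wA i = c * lamT i" using lamA by (intro exI[of _ "1/441"]) simp
  show "\<exists>c>0. \<forall>i\<in>hnodes. lam_of wB i = c * lamT i" using lamB by (intro exI[of _ "1/441"]) simp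
  fix x show "\<exists>\<mu>. walk_law wA x \<mu>" by (rule exists_all[OF mu0_walk[OF wposA] wposA])
next
  fix x show "\<exists>\<mu>. walk_law wB x \<mu>" by (rule exists_all[OF mu0_walk[OF wposB] wposB])
next
  fix x x' \<mu> \<mu>' assume A: "walk_law wA x \<mu>" and B: "walk_law wB x' \<mu>'"
  have eA: "\<mu> = mu0 wA" by (rule all_eq[OF mu0_walk[OF wposA] wposA A])
  have eB: "\<mu>' = mu0 wB" by (rule all_eq[OF mu0_walk[OF wposB] wposB B])
  have gA: "simple_gibbs lamT (mu0 wA) \<and> invariant_measure (mu0 wA)" by (rule good_measure[OF wposA lamA])
  have gB: "simple_gibbs lamT (mu0 wB) \<and> invariant_measure (mu0 wB)" by (rule good_measure[OF wposB lamB])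
  show "simple_gibbs lamT \<mu>" "invariant_measure \<mu>" "simple_gibbs lamT \<mu>'" "invariant_measure \<mu>'"
    using gA gB eA eB by auto
  have mA: "measure (mu0 wA) (cyl {root0} (\<lambda>_. 1)) = 24/41"
    using mu0_cyl[OF wposA rooted_single[of root0]] rootA by (simp add: wform_def)
  have mB: "measure (mu0 wB) (cyl {root0} (\<lambda>_. 1)) = 3/41"
    using mu0_cyl[OF wposB rooted_single[of root0]] rootB by (simp add: wform_def)
  show "\<mu> \<noteq> \<mu>'" using mA mB eA eB by auto
qed

end
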